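(* Let $d\ge 1$ and $m\in\mathbb{N}$. Let $\mathcal{A}$ be the adjacency matrix of $\mathbb{Z}^d$ acting on $\ell^2(\mathbb{Z}^d)$, i.e. $(\mathcal{A}\psi)(n)=\sum_{j=1}^d\bigl(\psi(n-\mathfrak{e}_j)+\psi(n+\mathfrak{e}_j)\bigr)$, where $\{\mathfrak{e}_j\}$ is the standard basis of $\mathbb{Z}^d$. For $k\ge 1$ define the $k$-step adjacency operator $(S_k\psi)(n)=\sum_{j=1}^d\bigl(\psi(n-k\mathfrak{e}_j)+\psi(n+k\mathfrak{e}_j)\bigr)$. For $\psi\in\ell^2(\mathbb{Z}^d)$ let $n^m\psi\colon\mathbb{Z}^d\to\mathbb{C}^d$, $n^m\psi(n)=(n_1^m\psi(n),\dots,n_d^m\psi(n))$, with $\|n^m\psi\|^2=\sum_{n}\sum_{j=1}^d |n_j|^{2m}|\psi(n)|^2$. Then for every $\psi\in\ell^2(\mathbb{Z}^d)$ with $\|n^m\psi\|<\infty$, $$\lim_{t\to+\infty}\frac{\|n^m e^{\mathrm{i}t\mathcal{A}}\psi\|^2}{t^{2m}}=d\binom{2m}{m}\|\psi\|^2+\sum_{q=0}^{m-1}\binom{2m}{q}(-1)^{q+m}\langle\psi,S_{2m-2q}\psi\rangle .$$ Moreover, this limit is strictly positive if $\psi\neq 0$, and it is at most $4^m d\|\psi\|^2$.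
   Context: $\langle\phi,\psi\rangle=\sum_{n\in\mathbb{Z}^d}\overline{\phi(n)}\psi(n)$. *)

theory Defs
  imports "HOL-Analysis.Analysis"
begin

text \<open>Lattice Z^d is modelled as the type int^'d, with d = CARD('d) >= 1.
  Functions psi :: int^'d => complex.\<close>

definition adjZ :: "(int^'d \<Rightarrow> complex) \<Rightarrow> (int^'d \<Rightarrow> complex)" where
  "adjZ \<psi> n = (\<Sum>j\<in>UNIV. \<psi> (n - axis j 1) + \<psi> (n + axis j 1))"

definition stepS :: "nat \<Rightarrow> (int^'d \<Rightarrow> complex) \<Rightarrow> (int^'d \<Rightarrow> complex)" where
  "stepS k \<psi> n = (\<Sum>j\<in>UNIV. \<psi> (n - axis j (int k)) + \<psi> (n + axis j (int k)))"

text \<open>e^{itA} psi, defined pointwise by the exponential series (A is bounded,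
  so the l^2-convergent series also converges pointwise to the same limit).\<close>
definition evolZ :: "real \<Rightarrow> (int^'d \<Rightarrow> complex) \<Rightarrow> (int^'d \<Rightarrow> complex)" where
  "evolZ t \<psi> n = (\<Sum>k. ((\<i> * complex_of_real t) ^ k / fact k) * (adjZ ^^ k) \<psi> n)"

definition in_l2 :: "(int^'d \<Rightarrow> complex) \<Rightarrow> bool" where
  "in_l2 \<psi> \<longleftrightarrow> (\<lambda>n. (cmod (\<psi> n))\<^sup>2) summable_on UNIV"

definition l2norm_sq :: "(int^'d \<Rightarrow> complex) \<Rightarrow> real" where
  "l2norm_sq \<psi> = (\<Sum>\<^sub>\<infinity>n. (cmod (\<psi> n))\<^sup>2)"

definition l2inner :: "(int^'d \<Rightarrow> complex) \<Rightarrow> (int^'d \<Rightarrow> complex) \<Rightarrow> complex" where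
  "l2inner \<phi> \<psi> = (\<Sum>\<^sub>\<infinity>n. cnj (\<phi> n) * \<psi> n)"

definition moment_dens :: "nat \<Rightarrow> (int^'d \<Rightarrow> complex) \<Rightarrow> int^'d \<Rightarrow> real" where
  "moment_dens m \<psi> n = (\<Sum>j\<in>UNIV. \<bar>real_of_int (n $ j)\<bar> ^ (2*m) * (cmod (\<psi> n))\<^sup>2)"

definition moment_sq :: "nat \<Rightarrow> (int^'d \<Rightarrow> complex) \<Rightarrow> real" where
  "moment_sq m \<psi> = (\<Sum>\<^sub>\<infinity>n. moment_dens m \<psi> n)"

end

theory Submission
  imports Defs
begin

lemma summable_shift:
  fixes g :: "int^'d \<Rightarrow> 'a::{comm_monoid_add,t2_space}"
  shows "(\<lambda>n. g (n + v)) summable_on UNIV \<longleftrightarrow> g summable_on UNIV"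
  by (rule summable_on_reindex_bij_witness[of UNIV "\<lambda>n. n - v" "\<lambda>n. n + v"]) auto

lemma infsum_shift:
  fixes g :: "int^'d \<Rightarrow> 'a::{comm_monoid_add,t2_space}"
  shows "(\<Sum>\<^sub>\<infinity>n. g (n + v)) = (\<Sum>\<^sub>\<infinity>n. g n)"
  by (rule infsum_reindex_bij_witness[of UNIV "\<lambda>n. n - v" "\<lambda>n. n + v"]) auto

lemma summable_shift':
  fixes g :: "int^'d \<Rightarrow> 'a::{comm_monoid_add,t2_space}"
  shows "(\<lambda>n. g (n - v)) summable_on UNIV \<longleftrightarrow> g summable_on UNIV"
  using summable_shift[of g "-v"] by simp

lemma infsum_shift':
  fixes g :: "int^'d \<Rightarrow> 'a::{comm_monoid_add,t2_space}"
  shows "(\<Sum>\<^sub>\<infinity>n. g (n - v)) = (\<Sum>\<^sub>\<infinity>n. g n)"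
  using infsum_shift[of g "-v"] by simp

lemma sq_sum_le: "((x::real) + y)\<^sup>2 \<le> 2 * x\<^sup>2 + 2 * y\<^sup>2"
proof -
  have "0 \<le> (x - y)\<^sup>2" by simp
  thus ?thesis by (simp add: power2_diff power2_sum)
qed

lemma cmod_add_sq: "(cmod (a + b))\<^sup>2 \<le> 2 * (cmod a)\<^sup>2 + 2 * (cmod b)\<^sup>2"
proof -
  have "cmod (a+b) \<le> cmod a + cmod b" by (rule norm_triangle_ineq)
  hence "(cmod (a+b))\<^sup>2 \<le> (cmod a + cmod b)\<^sup>2" by (simp add: power_mono)
  also have "\<dots> \<le> 2 * (cmod a)\<^sup>2 + 2 * (cmod b)\<^sup>2" by (rule sq_sum_le)
  finally show ?thesis .
qed

lemma cmod_diff_sq: "(cmod (a - b))\<^sup>2 \<le> 2 * (cmod a)\<^sup>2 + 2 * (cmod b)\<^sup>2"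
  using cmod_add_sq[of a "-b"] by simp

lemma mult_le_sq_sum: "0 \<le> (x::real) \<Longrightarrow> 0 \<le> y \<Longrightarrow> x * y \<le> x\<^sup>2 + y\<^sup>2"
proof -
  assume "0 \<le> x" "0 \<le> y"
  have "0 \<le> (x - y)\<^sup>2" by simp
  hence "2 * x * y \<le> x\<^sup>2 + y\<^sup>2" by (simp add: power2_diff)
  moreover have "0 \<le> x * y" using \<open>0 \<le> x\<close> \<open>0 \<le> y\<close> by simp
  ultimately show ?thesis by linarith
qed

lemma in_l2_add: "in_l2 f \<Longrightarrow> in_l2 g \<Longrightarrow> in_l2 (\<lambda>n. f n + g n)"
  unfolding in_l2_def
  by (rule summable_on_comparison_test[where f="\<lambda>n. 2 * (cmod (f n))\<^sup>2 + 2 * (cmod (g n))\<^sup>2"])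
     (auto intro!: summable_on_add summable_on_cmult_right cmod_add_sq)

lemma in_l2_diff: "in_l2 f \<Longrightarrow> in_l2 g \<Longrightarrow> in_l2 (\<lambda>n. f n - g n)"
  unfolding in_l2_def
  by (rule summable_on_comparison_test[where f="\<lambda>n. 2 * (cmod (f n))\<^sup>2 + 2 * (cmod (g n))\<^sup>2"])
     (auto intro!: summable_on_add summable_on_cmult_right cmod_diff_sq)

lemma in_l2_cmult: "in_l2 f \<Longrightarrow> in_l2 (\<lambda>n. c * f n)"
  unfolding in_l2_def
  by (drule summable_on_cmult_right[where c="(cmod c)\<^sup>2"]) (simp add: norm_mult power_mult_distrib)

lemma in_l2_zero: "in_l2 (\<lambda>n. 0)"
  unfolding in_l2_def by simp

lemma in_l2_sum: "finite K \<Longrightarrow> (\<And>k. k \<in> K \<Longrightarrow> in_l2 (F k)) \<Longrightarrow> in_l2 (\<lambda>n. \<Sum>k\<in>K. F k n)"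
proof (induction K rule: finite_induct)
  case empty thus ?case by (simp add: in_l2_zero)
next
  case (insert x K) thus ?case by (simp add: in_l2_add)
qed

lemma in_l2_shift: "in_l2 f \<Longrightarrow> in_l2 (\<lambda>n. f (n + v))"
  unfolding in_l2_def using summable_shift[of "\<lambda>n. (cmod (f n))\<^sup>2" v] by simp

lemma in_l2_shift': "in_l2 f \<Longrightarrow> in_l2 (\<lambda>n. f (n - v))"
  unfolding in_l2_def using summable_shift'[of "\<lambda>n. (cmod (f n))\<^sup>2" v] by simp

lemma l2norm_nonneg: "0 \<le> l2norm_sq f"
  unfolding l2norm_sq_def by (simp add: infsum_nonneg)

lemma l2_point: "in_l2 f \<Longrightarrow> (cmod (f n))\<^sup>2 \<le> l2norm_sq f"
  unfolding in_l2_def l2norm_sq_def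
  using finite_sum_le_infsum[of "\<lambda>n. (cmod (f n))\<^sup>2" UNIV "{n}"] by simp

definition bnd :: "(int^'d \<Rightarrow> complex) \<Rightarrow> bool" where
  "bnd f \<longleftrightarrow> (\<exists>B. \<forall>n. cmod (f n) \<le> B)"

lemma in_l2_bnd: "in_l2 f \<Longrightarrow> bnd f"
  unfolding bnd_def using l2_point real_le_rsqrt by blast

lemma inner_summable: "in_l2 f \<Longrightarrow> in_l2 g \<Longrightarrow> (\<lambda>n. cnj (f n) * g n) summable_on UNIV"
  unfolding in_l2_def summable_on_iff_abs_summable_on_complex
  by (rule summable_on_comparison_test[where f="\<lambda>n. (cmod (f n))\<^sup>2 + (cmod (g n))\<^sup>2"])
     (auto intro!: summable_on_add mult_le_sq_sum simp: norm_mult)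

lemma l2inner_add2: "in_l2 f \<Longrightarrow> in_l2 g \<Longrightarrow> in_l2 h \<Longrightarrow>
  l2inner f (\<lambda>n. g n + h n) = l2inner f g + l2inner f h"
  unfolding l2inner_def by (simp add: distrib_left infsum_add inner_summable)

lemma l2inner_cmult2: "l2inner f (\<lambda>n. c * g n) = c * l2inner f g"
  unfolding l2inner_def
  by (simp add: infsum_cmult_right' mult.left_commute)

lemma l2inner_diff2: "in_l2 f \<Longrightarrow> in_l2 g \<Longrightarrow> in_l2 h \<Longrightarrow>
  l2inner f (\<lambda>n. g n - h n) = l2inner f g - l2inner f h"
proof -
  assume a: "in_l2 f" "in_l2 g" "in_l2 h"
  have "l2inner f (\<lambda>n. g n + (-1) * h n) = l2inner f g + l2inner f (\<lambda>n. (-1) * h n)"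
    using a in_l2_cmult[of h "-1"] by (intro l2inner_add2) auto
  thus ?thesis using l2inner_cmult2[of f "-1" h] by simp
qed

lemma l2inner_sum2: "finite K \<Longrightarrow> in_l2 f \<Longrightarrow> (\<And>k. k \<in> K \<Longrightarrow> in_l2 (G k)) \<Longrightarrow>
  l2inner f (\<lambda>n. \<Sum>k\<in>K. G k n) = (\<Sum>k\<in>K. l2inner f (G k))"
proof (induction K rule: finite_induct)
  case empty thus ?case by (simp add: l2inner_def)
next
  case (insert x K) thus ?case by (simp add: l2inner_add2 in_l2_sum)
qed

lemma l2inner_cnj: "l2inner g f = cnj (l2inner f g)"
  unfolding l2inner_def by (subst infsum_cnj[symmetric]) (simp add: mult.commute)

lemma l2norm_inner: "in_l2 f \<Longrightarrow> complex_of_real (l2norm_sq f) = l2inner f f"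
proof -
  assume "in_l2 f"
  hence "((\<lambda>n. (cmod (f n))\<^sup>2) has_sum l2norm_sq f) UNIV"
    unfolding in_l2_def l2norm_sq_def by simp
  hence "((\<lambda>n. complex_of_real ((cmod (f n))\<^sup>2)) has_sum complex_of_real (l2norm_sq f)) UNIV"
    by (rule has_sum_of_real)
  moreover have "complex_of_real ((cmod (f n))\<^sup>2) = cnj (f n) * f n" for n
    using complex_norm_square[of "f n"] by (simp add: mult.commute)
  ultimately show ?thesis unfolding l2inner_def by (simp add: infsumI)
qed

lemma l2inner_shift: "l2inner (\<lambda>n. f (n - v)) g = l2inner f (\<lambda>n. g (n + v))"
  unfolding l2inner_def using infsum_shift[of "\<lambda>n. cnj (f n) * g (n + v)" "-v"] by simp

lemma l2inner_shift': "l2inner (\<lambda>n. f (n + v)) g = l2inner f (\<lambda>n. g (n - v))"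
  using l2inner_shift[of f "-v" g] by simp

lemma l2norm_shift: "l2norm_sq (\<lambda>n. f (n + v)) = l2norm_sq f"
  unfolding l2norm_sq_def using infsum_shift[of "\<lambda>n. (cmod (f n))\<^sup>2" v] by simp

lemma l2norm_shift': "l2norm_sq (\<lambda>n. f (n - v)) = l2norm_sq f"
  unfolding l2norm_sq_def using infsum_shift'[of "\<lambda>n. (cmod (f n))\<^sup>2" v] by simp

definition Wop :: "'d \<Rightarrow> (int^'d \<Rightarrow> complex) \<Rightarrow> int^'d \<Rightarrow> complex" where
  "Wop j f n = f (n - axis j 1) - f (n + axis j 1)"

definition Xop :: "'d \<Rightarrow> (int^'d \<Rightarrow> complex) \<Rightarrow> int^'d \<Rightarrow> complex" where
  "Xop j f n = of_int (n $ j) * f n"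

lemma adjZ_add: "adjZ (\<lambda>n. f n + g n) = (\<lambda>n. adjZ f n + adjZ g n)"
  by (rule ext) (simp add: adjZ_def sum.distrib algebra_simps)

lemma adjZ_cmult: "adjZ (\<lambda>n. c * f n) = (\<lambda>n. c * adjZ f n)"
  by (rule ext) (simp add: adjZ_def sum_distrib_left algebra_simps)

lemma adjZk_add: "(adjZ ^^ k) (\<lambda>n. f n + g n) = (\<lambda>n. (adjZ ^^ k) f n + (adjZ ^^ k) g n)"
  by (induction k) (simp_all add: adjZ_add)

lemma adjZk_cmult: "(adjZ ^^ k) (\<lambda>n. c * f n) = (\<lambda>n. c * (adjZ ^^ k) f n)"
  by (induction k) (simp_all add: adjZ_cmult)

lemma Wop_add: "Wop j (\<lambda>n. f n + g n) = (\<lambda>n. Wop j f n + Wop j g n)"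
  by (rule ext) (simp add: Wop_def algebra_simps)

lemma Wop_cmult: "Wop j (\<lambda>n. c * f n) = (\<lambda>n. c * Wop j f n)"
  by (rule ext) (simp add: Wop_def algebra_simps)

lemma adjZ_Wop: "adjZ (Wop j f) = Wop j (adjZ f)"
  by (rule ext) (simp add: adjZ_def Wop_def sum_subtractf sum.distrib algebra_simps)

lemma adjZk_Wop: "(adjZ ^^ k) (Wop j f) = Wop j ((adjZ ^^ k) f)"
  by (induction k) (simp_all add: adjZ_Wop)

lemma Xop_adjZ: "Xop j (adjZ f) = (\<lambda>n. adjZ (Xop j f) n + Wop j f n)"
proof (rule ext)
  fix n
  have "adjZ (Xop j f) n = (\<Sum>i\<in>UNIV. of_int (n $ j) * (f (n - axis i 1) + f (n + axis i 1))
        + (if i = j then f (n + axis i 1) - f (n - axis i 1) else 0))"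
    unfolding adjZ_def Xop_def
    by (rule sum.cong) (auto simp: axis_def algebra_simps)
  also have "\<dots> = of_int (n $ j) * adjZ f n + (f (n + axis j 1) - f (n - axis j 1))"
    by (simp add: sum.distrib adjZ_def sum_distrib_left distrib_left)
  finally show "Xop j (adjZ f) n = adjZ (Xop j f) n + Wop j f n"
    by (simp add: Xop_def Wop_def)
qed

lemma Xop_adjZk: "Xop j ((adjZ ^^ k) f) = (\<lambda>n. (adjZ ^^ k) (Xop j f) n + of_nat k * (adjZ ^^ (k - 1)) (Wop j f) n)"
proof (induction k)
  case 0 thus ?case by (simp add: Xop_def)
next
  case (Suc k)
  have "Xop j ((adjZ ^^ Suc k) f) = (\<lambda>n. adjZ (Xop j ((adjZ ^^ k) f)) n + Wop j ((adjZ ^^ k) f) n)"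
    by (simp add: Xop_adjZ)
  also have "\<dots> = (\<lambda>n. (adjZ ^^ Suc k) (Xop j f) n + of_nat k * adjZ ((adjZ ^^ (k - 1)) (Wop j f)) n
       + (adjZ ^^ k) (Wop j f) n)"
    by (simp add: Suc adjZ_add adjZ_cmult adjZk_Wop)
  also have "\<dots> = (\<lambda>n. (adjZ ^^ Suc k) (Xop j f) n + of_nat (Suc k) * (adjZ ^^ (Suc k - 1)) (Wop j f) n)"
    by (cases k) (simp_all add: algebra_simps)
  finally show ?case .
qed


lemma bnd_adjZ_le:
  fixes f :: "int^'d \<Rightarrow> complex"
  assumes "\<And>n. cmod (f n) \<le> B"
  shows "cmod (adjZ f n) \<le> 2 * real CARD('d) * B"
proof -
  have "cmod (adjZ f n) \<le> (\<Sum>i\<in>UNIV. cmod (f (n - axis i 1) + f (n + axis i 1)))"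
    unfolding adjZ_def by (rule norm_sum)
  also have "\<dots> \<le> (\<Sum>i\<in>(UNIV::'d set). 2 * B)"
  proof (rule sum_mono)
    fix i :: 'd
    have "cmod (f (n - axis i 1) + f (n + axis i 1)) \<le> cmod (f (n - axis i 1)) + cmod (f (n + axis i 1))"
      by (rule norm_triangle_ineq)
    thus "cmod (f (n - axis i 1) + f (n + axis i 1)) \<le> 2 * B"
      using assms[of "n - axis i 1"] assms[of "n + axis i 1"] by linarith
  qed
  also have "\<dots> = 2 * real CARD('d) * B" by simp
  finally show ?thesis .
qed

lemma bnd_adjZk_le:
  fixes f :: "int^'d \<Rightarrow> complex"
  assumes "\<And>n. cmod (f n) \<le> B"
  shows "cmod ((adjZ ^^ k) f n) \<le> (2 * real CARD('d)) ^ k * B"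
proof (induction k arbitrary: n)
  case 0 thus ?case using assms by simp
next
  case (Suc k)
  have "cmod (adjZ ((adjZ ^^ k) f) n) \<le> 2 * real CARD('d) * ((2 * real CARD('d)) ^ k * B)"
    by (rule bnd_adjZ_le) (rule Suc)
  thus ?case by (simp add: mult.assoc)
qed

lemma bnd_add: "bnd f \<Longrightarrow> bnd g \<Longrightarrow> bnd (\<lambda>n. f n + g n)"
proof -
  assume "bnd f" "bnd g"
  then obtain B C where "\<And>n. cmod (f n) \<le> B" "\<And>n. cmod (g n) \<le> C" unfolding bnd_def by blast
  hence "cmod (f n + g n) \<le> B + C" for n by (meson add_mono norm_triangle_le)
  thus ?thesis unfolding bnd_def by blast
qed

lemma bnd_cmult: "bnd f \<Longrightarrow> bnd (\<lambda>n. c * f n)"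
proof -
  assume "bnd f"
  then obtain B where B: "\<And>n. cmod (f n) \<le> B" unfolding bnd_def by blast
  hence "cmod (c * f n) \<le> cmod c * B" for n by (simp add: norm_mult mult_left_mono)
  thus ?thesis unfolding bnd_def by blast
qed

lemma bnd_shift: "bnd f \<Longrightarrow> bnd (\<lambda>n. f (n + v))"
  unfolding bnd_def by blast

lemma bnd_shift': "bnd f \<Longrightarrow> bnd (\<lambda>n. f (n - v))"
  unfolding bnd_def by blast

lemma bnd_Wop: "bnd f \<Longrightarrow> bnd (Wop j f)"
proof -
  assume "bnd f"
  hence "bnd (\<lambda>n. f (n - axis j 1) + (-1) * f (n + axis j 1))"
    by (intro bnd_add bnd_cmult bnd_shift bnd_shift')
  thus ?thesis by (simp add: Wop_def[abs_def])
qed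

lemma bnd_adjZ: "bnd f \<Longrightarrow> bnd (adjZ f)"
  unfolding bnd_def using bnd_adjZ_le by blast

lemma bnd_adjZk: "bnd f \<Longrightarrow> bnd ((adjZ ^^ k) f)"
  by (induction k) (simp_all add: bnd_adjZ)

lemma bnd_sum: "finite K \<Longrightarrow> (\<And>k. k \<in> K \<Longrightarrow> bnd (F k)) \<Longrightarrow> bnd (\<lambda>n. \<Sum>k\<in>K. F k n)"
proof (induction K rule: finite_induct)
  case empty thus ?case unfolding bnd_def by (intro exI[of _ 0]) simp
next
  case (insert x K) thus ?case by (simp add: bnd_add)
qed

lemma adjZ_zero: "adjZ (\<lambda>n. 0) = (\<lambda>n. 0)"
  by (rule ext) (simp add: adjZ_def)

lemma adjZk_zero: "(adjZ ^^ k) (\<lambda>n. 0) = (\<lambda>n. 0)"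
  by (induction k) (simp_all add: adjZ_zero)

definition cf :: "real \<Rightarrow> nat \<Rightarrow> complex" where
  "cf t k = (\<i> * complex_of_real t) ^ k / fact k"

lemma norm_cf: "norm (cf t k) = \<bar>t\<bar> ^ k / fact k"
  by (simp add: cf_def norm_divide norm_power norm_mult)

lemma evolZ_cf: "evolZ t f n = (\<Sum>k. cf t k * (adjZ ^^ k) f n)"
  by (simp add: evolZ_def cf_def)

lemma summable_cfC: "summable (\<lambda>k. norm (cf t k) * C ^ k)"
proof -
  have "summable (\<lambda>k. inverse (fact k) * (\<bar>t\<bar> * C) ^ k)" by (rule summable_exp)
  moreover have "inverse (fact k) * (\<bar>t\<bar> * C) ^ k = norm (cf t k) * C ^ k" for k
    by (simp add: norm_cf power_mult_distrib field_simps)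
  ultimately show ?thesis by simp
qed

lemma evol_summable_le:
  fixes f :: "int^'d \<Rightarrow> complex"
  assumes "\<And>n. cmod (f n) \<le> B"
  shows "summable (\<lambda>k. norm (cf t k * (adjZ ^^ k) f n))"
proof (rule summable_comparison_test')
  show "summable (\<lambda>k. norm (cf t k) * (2 * real CARD('d)) ^ k * B)"
    by (rule summable_mult2) (rule summable_cfC)
  fix k :: nat
  have "norm (cf t k * (adjZ ^^ k) f n) = norm (cf t k) * cmod ((adjZ ^^ k) f n)"
    by (simp add: norm_mult)
  also have "\<dots> \<le> norm (cf t k) * ((2 * real CARD('d)) ^ k * B)"
    using bnd_adjZk_le[OF assms, where k=k and n=n] by (intro mult_left_mono) auto
  finally show "norm (norm (cf t k * (adjZ ^^ k) f n)) \<le> norm (cf t k) * (2 * real CARD('d)) ^ k * B"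
    by (simp add: mult.assoc)
qed

lemma evol_summable:
  assumes "bnd f"
  shows "summable (\<lambda>k. norm (cf t k * (adjZ ^^ k) f n))"
    and "summable (\<lambda>k. cf t k * (adjZ ^^ k) f n)"
proof -
  obtain B where "\<And>n. cmod (f n) \<le> B" using assms unfolding bnd_def by blast
  thus "summable (\<lambda>k. norm (cf t k * (adjZ ^^ k) f n))" by (rule evol_summable_le)
  thus "summable (\<lambda>k. cf t k * (adjZ ^^ k) f n)" by (rule summable_norm_cancel)
qed

lemma evol_add: "bnd f \<Longrightarrow> bnd g \<Longrightarrow> evolZ t (\<lambda>n. f n + g n) n = evolZ t f n + evolZ t g n"
  by (simp add: evolZ_cf adjZk_add distrib_left suminf_add evol_summable)

lemma evol_cmult: "bnd f \<Longrightarrow> evolZ t (\<lambda>n. c * f n) n = c * evolZ t f n"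
  by (simp add: evolZ_cf adjZk_cmult mult.left_commute suminf_mult evol_summable)

lemma evol_sum: "finite K \<Longrightarrow> (\<And>k. k \<in> K \<Longrightarrow> bnd (F k)) \<Longrightarrow>
   evolZ t (\<lambda>n. \<Sum>k\<in>K. F k n) n = (\<Sum>k\<in>K. evolZ t (F k) n)"
proof (induction K rule: finite_induct)
  case empty thus ?case by (simp add: evolZ_def adjZk_zero)
next
  case (insert x K) thus ?case by (simp add: evol_add bnd_sum)
qed

lemma cf_Suc: "cf t (Suc k) * of_nat (Suc k) = \<i> * complex_of_real t * cf t k"
proof -
  have aux: "x / (c * y) * c = x / y" if "c \<noteq> 0" for x c y :: complex
    by (cases "y = 0") (simp_all add: field_simps that)
  have nz: "(of_nat (Suc k) :: complex) \<noteq> 0" by (rule of_nat_neq_0)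
  have "cf t (Suc k) * of_nat (Suc k) = \<i> * complex_of_real t * (\<i> * complex_of_real t) ^ k / (of_nat (Suc k) * fact k) * of_nat (Suc k)"
    unfolding cf_def by (simp only: fact_Suc power_Suc of_nat_mult)
  also have "\<dots> = \<i> * complex_of_real t * (\<i> * complex_of_real t) ^ k / fact k"
    by (rule aux[OF nz])
  finally show ?thesis unfolding cf_def by simp
qed

lemma evol_Xop:
  assumes "bnd f" "bnd (Xop j f)"
  shows "Xop j (evolZ t f) n = evolZ t (Xop j f) n + \<i> * complex_of_real t * evolZ t (Wop j f) n"
proof -
  define g where "g k = cf t k * (of_nat k * (adjZ ^^ (k - 1)) (Wop j f) n)" for k
  have "(\<lambda>k. g (Suc k)) sums (\<i> * complex_of_real t * evolZ t (Wop j f) n)"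
  proof -
    have "(\<lambda>k. \<i> * complex_of_real t * (cf t k * (adjZ ^^ k) (Wop j f) n)) sums (\<i> * complex_of_real t * evolZ t (Wop j f) n)"
      unfolding evolZ_cf
      by (intro sums_mult summable_sums evol_summable bnd_Wop assms)
    moreover have "g (Suc k) = \<i> * complex_of_real t * (cf t k * (adjZ ^^ k) (Wop j f) n)" for k
      unfolding g_def by (simp only: diff_Suc_1 mult.assoc[symmetric] cf_Suc)
    ultimately show ?thesis by simp
  qed
  moreover have "g 0 = 0" by (simp add: g_def)
  ultimately have gs: "g sums (\<i> * complex_of_real t * evolZ t (Wop j f) n)"
    using sums_Suc_iff[of g] by simp
  have "Xop j (evolZ t f) n = (\<Sum>k. cf t k * Xop j ((adjZ ^^ k) f) n)"
    unfolding Xop_def evolZ_cf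
    by (subst suminf_mult[symmetric]) (auto intro: evol_summable assms simp: algebra_simps)
  also have "\<dots> = (\<Sum>k. cf t k * (adjZ ^^ k) (Xop j f) n + g k)"
    by (simp add: Xop_adjZk g_def distrib_left)
  also have "\<dots> = (\<Sum>k. cf t k * (adjZ ^^ k) (Xop j f) n) + (\<Sum>k. g k)"
    by (rule suminf_add[symmetric]) (auto intro: evol_summable assms gs sums_summable)
  also have "\<dots> = evolZ t (Xop j f) n + \<i> * complex_of_real t * evolZ t (Wop j f) n"
    using sums_unique[OF gs] by (simp add: evolZ_cf)
  finally show ?thesis .
qed

lemma adjZ_evol:
  assumes "bnd f"
  shows "adjZ (evolZ t f) = evolZ t (adjZ f)"
proof (rule ext)
  fix n
  have "adjZ (evolZ t f) n = (\<Sum>i\<in>UNIV. (\<Sum>k. cf t k * (adjZ ^^ k) f (n - axis i 1) + cf t k * (adjZ ^^ k) f (n + axis i 1)))"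
    by (simp only: adjZ_def evolZ_cf) (intro sum.cong refl suminf_add evol_summable assms)
  also have "\<dots> = (\<Sum>k. \<Sum>i\<in>UNIV. cf t k * (adjZ ^^ k) f (n - axis i 1) + cf t k * (adjZ ^^ k) f (n + axis i 1))"
    by (rule suminf_sum[symmetric]) (intro summable_add evol_summable assms)
  also have "\<dots> = (\<Sum>k. cf t k * (adjZ ^^ k) (adjZ f) n)"
    by (simp only: funpow_swap1[symmetric] adjZ_def[of "(adjZ ^^ _) f"] sum_distrib_left distrib_left)
  finally show "adjZ (evolZ t f) n = evolZ t (adjZ f) n" by (simp add: evolZ_cf)
qed

lemma adjZk_evol:
  assumes "bnd f"
  shows "(adjZ ^^ k) (evolZ t f) = evolZ t ((adjZ ^^ k) f)"
proof (induction k)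
  case 0 thus ?case by simp
next
  case (Suc k) thus ?case
    by (simp add: adjZ_evol bnd_adjZk assms funpow_swap1)
qed


lemma infsum_suminf_c:
  fixes f :: "nat \<Rightarrow> complex"
  assumes "f summable_on UNIV"
  shows "infsum f UNIV = suminf f"
proof -
  have "(\<lambda>n. norm (f n)) summable_on UNIV"
    using assms summable_on_iff_abs_summable_on_complex by blast
  hence sn: "summable (\<lambda>n. norm (f n))"
    using summable_on_UNIV_nonneg_real_iff[of "\<lambda>n. norm (f n)"] by simp
  hence "f sums suminf f" by (rule summable_sums[OF summable_norm_cancel])
  hence "(f has_sum suminf f) UNIV" using sn by (intro norm_summable_imp_has_sum)
  thus ?thesis by (rule infsumI)
qed

lemma summable_on_finsum:
  "finite I \<Longrightarrow> (\<And>i. i \<in> I \<Longrightarrow> F i summable_on A) \<Longrightarrow>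
   (\<lambda>x. \<Sum>i\<in>I. F i x :: 'b::{topological_comm_monoid_add}) summable_on A"
proof (induction I rule: finite_induct)
  case empty thus ?case by simp
next
  case (insert y I) thus ?case by (simp add: summable_on_add)
qed

lemma infsum_finsum:
  "finite I \<Longrightarrow> (\<And>i. i \<in> I \<Longrightarrow> F i summable_on A) \<Longrightarrow>
   infsum (\<lambda>x. \<Sum>i\<in>I. F i x :: 'b::{topological_comm_monoid_add,t2_space}) A = (\<Sum>i\<in>I. infsum (F i) A)"
proof (induction I rule: finite_induct)
  case empty thus ?case by simp
next
  case (insert y I) thus ?case by (simp add: infsum_add summable_on_finsum)
qed

lemma prod_summable_on:
  fixes \<alpha> \<gamma> :: "nat \<Rightarrow> real"
  assumes "\<And>k. 0 \<le> \<alpha> k" "\<And>k. 0 \<le> \<gamma> k" "summable \<alpha>" "summable \<gamma>"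
  shows "(\<lambda>(k,l). \<alpha> k * \<gamma> l) summable_on UNIV"
proof (rule nonneg_bdd_above_summable_on)
  show "\<And>x. x \<in> UNIV \<Longrightarrow> 0 \<le> (case x of (k, l) \<Rightarrow> \<alpha> k * \<gamma> l)"
    using assms by auto
  show "bdd_above (sum (\<lambda>(k,l). \<alpha> k * \<gamma> l) ` {F. F \<subseteq> UNIV \<and> finite F})"
  proof (rule bdd_aboveI2)
    fix F :: "(nat \<times> nat) set" assume "F \<in> {F. F \<subseteq> UNIV \<and> finite F}"
    hence fin: "finite F" by simp
    have "sum (\<lambda>(k,l). \<alpha> k * \<gamma> l) F \<le> sum (\<lambda>(k,l). \<alpha> k * \<gamma> l) (fst ` F \<times> snd ` F)"
      by (rule sum_mono2) (use fin assms in \<open>auto simp: subset_fst_snd\<close>)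
    also have "\<dots> = sum \<alpha> (fst ` F) * sum \<gamma> (snd ` F)"
      by (simp add: sum_product sum.cartesian_product)
    also have "\<dots> \<le> suminf \<alpha> * suminf \<gamma>"
      by (intro mult_mono sum_le_suminf suminf_nonneg sum_nonneg) (use assms fin in auto)
    finally show "sum (\<lambda>(k,l). \<alpha> k * \<gamma> l) F \<le> suminf \<alpha> * suminf \<gamma>" .
  qed
qed

lemma double_series:
  fixes a b \<beta> :: "nat \<Rightarrow> complex"
  assumes sa: "summable (\<lambda>k. norm (a k) * C ^ k)" and sb: "summable (\<lambda>k. norm (b k) * C ^ k)"
    and bb: "\<And>N. norm (\<beta> N) \<le> C ^ N * B" and C: "0 \<le> C"
  shows "(\<Sum>k. \<Sum>l. a k * b l * \<beta> (k + l)) = (\<Sum>N. (\<Sum>k\<le>N. a k * b (N - k)) * \<beta> N)"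
proof -
  define F where "F k l = a k * b l * \<beta> (k + l)" for k l
  have B: "0 \<le> B" using order_trans[OF norm_ge_zero bb[of 0]] by simp
  have Fb: "norm (F k l) \<le> (norm (a k) * C ^ k) * (norm (b l) * C ^ l * B)" for k l
  proof -
    have "norm (F k l) = norm (a k) * norm (b l) * norm (\<beta> (k + l))"
      by (simp add: F_def norm_mult)
    also have "\<dots> \<le> norm (a k) * norm (b l) * (C ^ (k + l) * B)"
      by (intro mult_left_mono bb) simp
    finally show ?thesis by (simp add: power_add algebra_simps)
  qed
  have pS: "(\<lambda>(k,l). (norm (a k) * C ^ k) * (norm (b l) * C ^ l * B)) summable_on UNIV"
    by (rule prod_summable_on[OF _ _ sa summable_mult2[OF sb]]) (simp_all add: C B)
  have FS: "(\<lambda>(k,l). F k l) summable_on UNIV"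
    unfolding summable_on_iff_abs_summable_on_complex
    by (rule summable_on_comparison_test[OF pS]) (auto simp: Fb)
  have row: "(\<lambda>l. F k l) summable_on UNIV" for k
  proof -
    have "summable (\<lambda>l. (norm (a k) * C ^ k) * (norm (b l) * C ^ l * B))"
      by (rule summable_mult[OF summable_mult2[OF sb]])
    hence "summable (\<lambda>l. norm (F k l))"
      by (rule summable_comparison_test') (simp add: Fb)
    thus ?thesis by (rule norm_summable_imp_summable_on)
  qed
  have reix: "(\<lambda>(k,l). F k l) summable_on UNIV \<longleftrightarrow> (\<lambda>(N,k). F k (N - k)) summable_on (Sigma UNIV (\<lambda>N. {..N}))"
    by (rule summable_on_reindex_bij_witness[where j="\<lambda>(k,l). (k + l, k)" and i="\<lambda>(N,k). (k, N - k)"]) auto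
  have "(\<Sum>k. \<Sum>l. F k l) = (\<Sum>k. infsum (F k) UNIV)"
    by (simp add: infsum_suminf_c row)
  also have "\<dots> = infsum (\<lambda>k. infsum (F k) UNIV) UNIV"
    using FS by (intro infsum_suminf_c[symmetric] summable_on_Sigma_banach) simp
  also have "\<dots> = infsum (\<lambda>(k,l). F k l) (UNIV \<times> UNIV)"
    using FS by (intro infsum_Sigma'_banach) simp
  also have "\<dots> = infsum (\<lambda>(N,k). F k (N - k)) (Sigma UNIV (\<lambda>N. {..N}))"
    by (rule infsum_reindex_bij_witness[where j="\<lambda>(k,l). (k + l, k)" and i="\<lambda>(N,k). (k, N - k)"]) auto
  also have "\<dots> = infsum (\<lambda>N. infsum (\<lambda>k. F k (N - k)) {..N}) UNIV"
  proof -
    have "(\<lambda>(N,k). F k (N - k)) summable_on (Sigma UNIV (\<lambda>N. {..N}))"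
      using FS reix by simp
    thus ?thesis by (intro infsum_Sigma'_banach[symmetric]) simp
  qed
  also have "\<dots> = (\<Sum>N. (\<Sum>k\<le>N. F k (N - k)))"
  proof -
    have "(\<lambda>(N,k). F k (N - k)) summable_on (Sigma UNIV (\<lambda>N. {..N}))"
      using FS reix by simp
    hence "(\<lambda>N. infsum (\<lambda>k. F k (N - k)) {..N}) summable_on UNIV"
      by (intro summable_on_Sigma_banach) simp
    thus ?thesis by (simp add: infsum_suminf_c)
  qed
  also have "\<dots> = (\<Sum>N. (\<Sum>k\<le>N. a k * b (N - k)) * \<beta> N)"
    by (simp add: F_def sum_distrib_right)
  finally show ?thesis by (simp add: F_def)
qed


lemma cf_conv: "(\<Sum>k\<le>N. cf (-t) k * cf t (N - k)) = (if N = 0 then 1 else 0)"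
proof -
  define S where "S x n = x ^ n /\<^sub>R fact n" for x :: complex and n
  have cS: "cf s k = S (\<i> * complex_of_real s) k" for s k
    by (simp add: cf_def S_def scaleR_conv_of_real divide_inverse mult.commute)
  have "S (- (\<i> * complex_of_real t) + \<i> * complex_of_real t) N =
        (\<Sum>i\<le>N. S (- (\<i> * complex_of_real t)) i * S (\<i> * complex_of_real t) (N - i))"
    unfolding S_def by (rule exp_series_add_commuting) simp
  hence h: "S 0 N = (\<Sum>i\<le>N. S (- (\<i> * complex_of_real t)) i * S (\<i> * complex_of_real t) (N - i))"
    by simp
  have "(\<Sum>k\<le>N. cf (-t) k * cf t (N - k)) = (\<Sum>i\<le>N. S (- (\<i> * complex_of_real t)) i * S (\<i> * complex_of_real t) (N - i))"
    by (simp add: cS)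
  also have "\<dots> = S 0 N" using h by simp
  also have "\<dots> = (if N = 0 then 1 else 0)" by (simp add: S_def power_0_left)
  finally show ?thesis .
qed

lemma funpow_comm_add: "(g ^^ l) ((g ^^ k) x) = (g ^^ (k + l)) x"
  by (metis add.commute comp_apply funpow_add)

lemma evol_inverse:
  fixes f :: "int^'d \<Rightarrow> complex"
  assumes "bnd f"
  shows "evolZ (-t) (evolZ t f) n = f n"
proof -
  obtain B where B: "\<And>n. cmod (f n) \<le> B" using assms unfolding bnd_def by blast
  have "evolZ (-t) (evolZ t f) n = (\<Sum>k. cf (-t) k * evolZ t ((adjZ ^^ k) f) n)"
    by (simp add: evolZ_cf[of "-t"] adjZk_evol assms)
  also have "\<dots> = (\<Sum>k. \<Sum>l. cf (-t) k * cf t l * (adjZ ^^ (k + l)) f n)"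
  proof -
    have "cf (-t) k * evolZ t ((adjZ ^^ k) f) n = (\<Sum>l. cf (-t) k * cf t l * (adjZ ^^ (k + l)) f n)" for k
    proof -
      have "(\<Sum>l. cf (-t) k * cf t l * (adjZ ^^ (k + l)) f n) = (\<Sum>l. cf (-t) k * (cf t l * (adjZ ^^ l) ((adjZ ^^ k) f) n))"
        by (simp add: funpow_comm_add mult.assoc)
      also have "\<dots> = cf (-t) k * evolZ t ((adjZ ^^ k) f) n"
        unfolding evolZ_cf by (rule suminf_mult) (rule evol_summable(2)[OF bnd_adjZk[OF assms]])
      finally show ?thesis by simp
    qed
    thus ?thesis by simp
  qed
  also have "\<dots> = (\<Sum>N. (\<Sum>k\<le>N. cf (-t) k * cf t (N - k)) * (adjZ ^^ N) f n)"
    by (rule double_series[where C="2 * real CARD('d)" and B=B, OF summable_cfC summable_cfC bnd_adjZk_le[OF B]]) simp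
  also have "\<dots> = (\<Sum>N. if N = 0 then (adjZ ^^ N) f n else 0)"
  proof -
    have "(if N = 0 then 1 else 0) * (adjZ ^^ N) f n = (if N = 0 then (adjZ ^^ N) f n else 0)" for N :: nat
      by simp
    thus ?thesis by (simp only: cf_conv)
  qed
  also have "\<dots> = f n"
    using sums_unique[OF sums_single[of 0 "\<lambda>N. (adjZ ^^ N) f n"]] by simp
  finally show ?thesis .
qed


lemma l2_adjZ:
  fixes f :: "int^'d \<Rightarrow> complex"
  assumes f: "in_l2 f"
  shows "in_l2 (adjZ f)" and "l2norm_sq (adjZ f) \<le> (2 * real CARD('d))\<^sup>2 * l2norm_sq f"
proof -
  define G where "G n = real CARD('d) * (\<Sum>i\<in>UNIV. 2 * (cmod (f (n - axis i 1)))\<^sup>2 + 2 * (cmod (f (n + axis i 1)))\<^sup>2)" for n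
  have pw: "(cmod (adjZ f n))\<^sup>2 \<le> G n" for n
  proof -
    have "cmod (adjZ f n) \<le> (\<Sum>i\<in>UNIV. cmod (f (n - axis i 1) + f (n + axis i 1)))"
      unfolding adjZ_def by (rule norm_sum)
    hence "(cmod (adjZ f n))\<^sup>2 \<le> (\<Sum>i\<in>UNIV. cmod (f (n - axis i 1) + f (n + axis i 1)))\<^sup>2"
      by (simp add: power_mono)
    also have "\<dots> \<le> (\<Sum>i\<in>UNIV. (cmod (f (n - axis i 1) + f (n + axis i 1)))\<^sup>2) * real CARD('d)"
      by (rule sum_squared_le_sum_of_squares)
    also have "\<dots> \<le> G n"
      unfolding G_def
      by (subst mult.commute, intro mult_left_mono sum_mono cmod_add_sq) simp
    finally show ?thesis .
  qed
  have s1: "(\<lambda>n. 2 * (cmod (f (n - axis i 1)))\<^sup>2) summable_on UNIV" for i :: 'd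
    using in_l2_shift'[OF f, of "axis i 1"] unfolding in_l2_def by (rule summable_on_cmult_right)
  have s2: "(\<lambda>n. 2 * (cmod (f (n + axis i 1)))\<^sup>2) summable_on UNIV" for i :: 'd
    using in_l2_shift[OF f, of "axis i 1"] unfolding in_l2_def by (rule summable_on_cmult_right)
  have GS: "G summable_on UNIV"
    unfolding G_def by (intro summable_on_cmult_right summable_on_finsum summable_on_add s1 s2) simp
  show l2: "in_l2 (adjZ f)"
    unfolding in_l2_def by (rule summable_on_comparison_test[OF GS]) (auto intro: pw)
  have "infsum G UNIV = real CARD('d) * (\<Sum>i\<in>(UNIV::'d set). 2 * l2norm_sq f + 2 * l2norm_sq f)"
  proof -
    have i1: "infsum (\<lambda>n. 2 * (cmod (f (n - axis i 1)))\<^sup>2) UNIV = 2 * l2norm_sq f" for i :: 'd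
      unfolding l2norm_sq_def
      by (simp add: infsum_cmult_right' infsum_shift'[of "\<lambda>n. (cmod (f n))\<^sup>2"])
    have i2: "infsum (\<lambda>n. 2 * (cmod (f (n + axis i 1)))\<^sup>2) UNIV = 2 * l2norm_sq f" for i :: 'd
      unfolding l2norm_sq_def
      by (simp add: infsum_cmult_right' infsum_shift[of "\<lambda>n. (cmod (f n))\<^sup>2"])
    have "infsum G UNIV = real CARD('d) * infsum (\<lambda>n. \<Sum>i\<in>UNIV. 2 * (cmod (f (n - axis i 1)))\<^sup>2 + 2 * (cmod (f (n + axis i 1)))\<^sup>2) UNIV"
      unfolding G_def by (rule infsum_cmult_right')
    also have "\<dots> = real CARD('d) * (\<Sum>i\<in>UNIV. infsum (\<lambda>n. 2 * (cmod (f (n - axis i 1)))\<^sup>2 + 2 * (cmod (f (n + axis i 1)))\<^sup>2) UNIV)"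
      by (subst infsum_finsum) (auto intro: summable_on_add s1 s2)
    also have "\<dots> = real CARD('d) * (\<Sum>i\<in>(UNIV::'d set). 2 * l2norm_sq f + 2 * l2norm_sq f)"
      by (simp add: infsum_add s1 s2 i1 i2)
    finally show ?thesis .
  qed
  also have "\<dots> = (2 * real CARD('d))\<^sup>2 * l2norm_sq f"
    by (simp add: power2_eq_square)
  finally have "infsum G UNIV = (2 * real CARD('d))\<^sup>2 * l2norm_sq f" .
  moreover have "l2norm_sq (adjZ f) \<le> infsum G UNIV"
    unfolding l2norm_sq_def using l2 GS pw unfolding in_l2_def by (intro infsum_mono) auto
  ultimately show "l2norm_sq (adjZ f) \<le> (2 * real CARD('d))\<^sup>2 * l2norm_sq f" by simp
qed

lemma l2_adjZk:
  fixes f :: "int^'d \<Rightarrow> complex"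
  assumes f: "in_l2 f"
  shows "in_l2 ((adjZ ^^ k) f) \<and> l2norm_sq ((adjZ ^^ k) f) \<le> ((2 * real CARD('d))\<^sup>2) ^ k * l2norm_sq f"
proof (induction k)
  case 0 thus ?case using f by simp
next
  case (Suc k)
  have a: "in_l2 (adjZ ((adjZ ^^ k) f))"
    and b: "l2norm_sq (adjZ ((adjZ ^^ k) f)) \<le> (2 * real CARD('d))\<^sup>2 * l2norm_sq ((adjZ ^^ k) f)"
    using l2_adjZ Suc by blast+
  have c: "(2 * real CARD('d))\<^sup>2 * l2norm_sq ((adjZ ^^ k) f) \<le> (2 * real CARD('d))\<^sup>2 * (((2 * real CARD('d))\<^sup>2) ^ k * l2norm_sq f)"
    using Suc by (intro mult_left_mono) auto
  have "l2norm_sq (adjZ ((adjZ ^^ k) f)) \<le> (2 * real CARD('d))\<^sup>2 * (((2 * real CARD('d))\<^sup>2) ^ k * l2norm_sq f)"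
    using order_trans[OF b c] .
  thus ?case using a by (simp only: funpow.simps comp_apply power_Suc mult.assoc)
qed


lemma weighted_cs:
  fixes c a :: "nat \<Rightarrow> complex"
  assumes sc: "summable (\<lambda>k. norm (c k))"
    and sca: "summable (\<lambda>k. norm (c k) * (norm (a k))\<^sup>2)"
    and s: "summable (\<lambda>k. c k * a k)"
  shows "(norm (\<Sum>k. c k * a k))\<^sup>2 \<le> (\<Sum>k. norm (c k)) * (\<Sum>k. norm (c k) * (norm (a k))\<^sup>2)"
proof (rule LIMSEQ_le)
  show "(\<lambda>K. (norm (\<Sum>k<K. c k * a k))\<^sup>2) \<longlonglongrightarrow> (norm (\<Sum>k. c k * a k))\<^sup>2"
    by (intro tendsto_intros summable_LIMSEQ s)
  show "(\<lambda>K. (\<Sum>k<K. norm (c k)) * (\<Sum>k<K. norm (c k) * (norm (a k))\<^sup>2))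
        \<longlonglongrightarrow> (\<Sum>k. norm (c k)) * (\<Sum>k. norm (c k) * (norm (a k))\<^sup>2)"
    by (intro tendsto_intros summable_LIMSEQ sc sca)
  show "\<exists>N. \<forall>K\<ge>N. (norm (\<Sum>k<K. c k * a k))\<^sup>2 \<le> (\<Sum>k<K. norm (c k)) * (\<Sum>k<K. norm (c k) * (norm (a k))\<^sup>2)"
  proof (intro exI allI impI)
    fix K :: nat
    have "norm (\<Sum>k<K. c k * a k) \<le> (\<Sum>k<K. norm (c k * a k))" by (rule norm_sum)
    also have "\<dots> = (\<Sum>k<K. sqrt (norm (c k)) * (sqrt (norm (c k)) * norm (a k)))"
      by (intro sum.cong refl) (simp add: norm_mult mult.assoc[symmetric])
    finally have "(norm (\<Sum>k<K. c k * a k))\<^sup>2 \<le> (\<Sum>k<K. sqrt (norm (c k)) * (sqrt (norm (c k)) * norm (a k)))\<^sup>2"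
      by (simp add: power_mono)
    also have "\<dots> \<le> (\<Sum>k<K. (sqrt (norm (c k)))\<^sup>2) * (\<Sum>k<K. (sqrt (norm (c k)) * norm (a k))\<^sup>2)"
      by (rule Cauchy_Schwarz_ineq_sum)
    also have "\<dots> = (\<Sum>k<K. norm (c k)) * (\<Sum>k<K. norm (c k) * (norm (a k))\<^sup>2)"
      by (simp add: power_mult_distrib)
    finally show "(norm (\<Sum>k<K. c k * a k))\<^sup>2 \<le> (\<Sum>k<K. norm (c k)) * (\<Sum>k<K. norm (c k) * (norm (a k))\<^sup>2)" .
  qed
qed

lemma pow_sq_comm: "((x::real) ^ k)\<^sup>2 = (x\<^sup>2) ^ k"
  by (metis power_mult mult.commute)

lemma sc1: "summable (\<lambda>k. norm (cf t k))"
  using summable_cfC[of t 1] by simp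

lemma evol_l2:
  fixes f :: "int^'d \<Rightarrow> complex"
  assumes f: "in_l2 f"
  shows "in_l2 (evolZ t f)"
proof -
  define D where "D = (2 * real CARD('d))\<^sup>2"
  obtain B where B: "\<And>n. cmod (f n) \<le> B" using in_l2_bnd[OF f] unfolding bnd_def by blast
  define Ct where "Ct = (\<Sum>k. norm (cf t k))"
  have fk: "in_l2 ((adjZ ^^ k) f)" "l2norm_sq ((adjZ ^^ k) f) \<le> D ^ k * l2norm_sq f" for k
    using l2_adjZk[OF f, of k] by (auto simp: D_def)
  have sca: "summable (\<lambda>k. norm (cf t k) * (cmod ((adjZ ^^ k) f n))\<^sup>2)" for n
  proof (rule summable_comparison_test')
    show "summable (\<lambda>k. norm (cf t k) * D ^ k * B\<^sup>2)" by (rule summable_mult2, rule summable_cfC)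
    fix k :: nat
    have "(cmod ((adjZ ^^ k) f n))\<^sup>2 \<le> ((2 * real CARD('d)) ^ k * B)\<^sup>2"
      using bnd_adjZk_le[OF B, where k=k and n=n] by (intro power_mono) auto
    also have "\<dots> = D ^ k * B\<^sup>2" by (simp add: D_def power_mult_distrib pow_sq_comm)
    finally have "(cmod ((adjZ ^^ k) f n))\<^sup>2 \<le> D ^ k * B\<^sup>2" .
    hence "norm (cf t k) * (cmod ((adjZ ^^ k) f n))\<^sup>2 \<le> norm (cf t k) * (D ^ k * B\<^sup>2)"
      by (intro mult_left_mono) auto
    thus "norm (norm (cf t k) * (cmod ((adjZ ^^ k) f n))\<^sup>2) \<le> norm (cf t k) * D ^ k * B\<^sup>2"
      by (simp add: mult.assoc)
  qed
  have pw: "(cmod (evolZ t f n))\<^sup>2 \<le> Ct * (\<Sum>k. norm (cf t k) * (cmod ((adjZ ^^ k) f n))\<^sup>2)" for n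
    unfolding evolZ_cf Ct_def
    by (rule weighted_cs[OF sc1 sca]) (rule evol_summable(2)[OF in_l2_bnd[OF f]])
  have sR: "summable (\<lambda>k. norm (cf t k) * (D ^ k * l2norm_sq f))"
    using summable_mult2[OF summable_cfC[of t D], of "l2norm_sq f"] by (simp add: mult.assoc)
  show ?thesis unfolding in_l2_def
  proof (rule nonneg_bdd_above_summable_on)
    show "bdd_above (sum (\<lambda>n. (cmod (evolZ t f n))\<^sup>2) ` {F. F \<subseteq> UNIV \<and> finite F})"
    proof (rule bdd_aboveI2)
      fix F :: "(int^'d) set" assume "F \<in> {F. F \<subseteq> UNIV \<and> finite F}"
      hence fin: "finite F" by simp
      have "(\<Sum>n\<in>F. (cmod (evolZ t f n))\<^sup>2) \<le> (\<Sum>n\<in>F. Ct * (\<Sum>k. norm (cf t k) * (cmod ((adjZ ^^ k) f n))\<^sup>2))"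
        by (rule sum_mono) (rule pw)
      also have "\<dots> = Ct * (\<Sum>k. \<Sum>n\<in>F. norm (cf t k) * (cmod ((adjZ ^^ k) f n))\<^sup>2)"
        by (simp add: sum_distrib_left[symmetric] suminf_sum[symmetric] sca)
      also have "\<dots> \<le> Ct * (\<Sum>k. norm (cf t k) * (D ^ k * l2norm_sq f))"
      proof (rule mult_left_mono)
        show "0 \<le> Ct" unfolding Ct_def by (rule suminf_nonneg[OF sc1]) simp
        show "(\<Sum>k. \<Sum>n\<in>F. norm (cf t k) * (cmod ((adjZ ^^ k) f n))\<^sup>2) \<le> (\<Sum>k. norm (cf t k) * (D ^ k * l2norm_sq f))"
        proof (rule suminf_le)
          fix k
          have "(\<Sum>n\<in>F. (cmod ((adjZ ^^ k) f n))\<^sup>2) \<le> l2norm_sq ((adjZ ^^ k) f)"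
            using fk(1)[of k] fin unfolding in_l2_def l2norm_sq_def
            by (intro finite_sum_le_infsum) auto
          also have "\<dots> \<le> D ^ k * l2norm_sq f" by (rule fk(2))
          finally show "(\<Sum>n\<in>F. norm (cf t k) * (cmod ((adjZ ^^ k) f n))\<^sup>2) \<le> norm (cf t k) * (D ^ k * l2norm_sq f)"
            by (simp add: sum_distrib_left[symmetric] mult_left_mono)
        next
          show "summable (\<lambda>k. \<Sum>n\<in>F. norm (cf t k) * (cmod ((adjZ ^^ k) f n))\<^sup>2)"
            by (rule summable_sum) (rule sca)
        qed (rule sR)
      qed
      finally show "(\<Sum>n\<in>F. (cmod (evolZ t f n))\<^sup>2) \<le> Ct * (\<Sum>k. norm (cf t k) * (D ^ k * l2norm_sq f))" .
    qed
  qed simp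
qed

lemma inner_evol:
  fixes g h :: "int^'d \<Rightarrow> complex"
  assumes g: "in_l2 g" and h: "in_l2 h"
  shows "summable (\<lambda>k. cf s k * l2inner g ((adjZ ^^ k) h))"
    and "l2inner g (evolZ s h) = (\<Sum>k. cf s k * l2inner g ((adjZ ^^ k) h))"
proof -
  define D where "D = (2 * real CARD('d))\<^sup>2"
  define F where "F k n = cf s k * (cnj (g n) * (adjZ ^^ k) h n)" for k n
  define G where "G k n = norm (cf s k) * ((cmod (g n))\<^sup>2 + (cmod ((adjZ ^^ k) h n))\<^sup>2)" for k n
  have hk: "in_l2 ((adjZ ^^ k) h)" "l2norm_sq ((adjZ ^^ k) h) \<le> D ^ k * l2norm_sq h" for k
    using l2_adjZk[OF h, of k] by (auto simp: D_def)
  have FG: "norm (F k n) \<le> G k n" for k n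
    unfolding F_def G_def norm_mult complex_mod_cnj
    by (intro mult_left_mono mult_le_sq_sum) auto
  have sG: "summable (\<lambda>k. norm (cf s k) * (l2norm_sq g + D ^ k * l2norm_sq h))"
  proof -
    have "summable (\<lambda>k. norm (cf s k) * l2norm_sq g + norm (cf s k) * D ^ k * l2norm_sq h)"
      by (rule summable_add[OF summable_mult2[OF sc1] summable_mult2[OF summable_cfC]])
    thus ?thesis by (simp add: algebra_simps)
  qed
  have GS: "(\<lambda>(k,n). G k n) summable_on UNIV"
  proof (rule nonneg_bdd_above_summable_on)
    show "\<And>x. x \<in> UNIV \<Longrightarrow> 0 \<le> (case x of (k,n) \<Rightarrow> G k n)" by (auto simp: G_def)
    show "bdd_above (sum (\<lambda>(k,n). G k n) ` {S. S \<subseteq> UNIV \<and> finite S})"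
    proof (rule bdd_aboveI2)
      fix S :: "(nat \<times> (int^'d)) set" assume "S \<in> {S. S \<subseteq> UNIV \<and> finite S}"
      hence fin: "finite S" by simp
      have "sum (\<lambda>(k,n). G k n) S \<le> sum (\<lambda>(k,n). G k n) (fst ` S \<times> snd ` S)"
        by (rule sum_mono2) (use fin in \<open>auto simp: subset_fst_snd G_def\<close>)
      also have "\<dots> = (\<Sum>k\<in>fst ` S. norm (cf s k) * (\<Sum>n\<in>snd ` S. (cmod (g n))\<^sup>2 + (cmod ((adjZ ^^ k) h n))\<^sup>2))"
        by (simp add: sum.cartesian_product[symmetric] G_def sum_distrib_left)
      also have "\<dots> \<le> (\<Sum>k\<in>fst ` S. norm (cf s k) * (l2norm_sq g + D ^ k * l2norm_sq h))"
      proof (rule sum_mono, rule mult_left_mono)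
        fix k assume "k \<in> fst ` S"
        have "(\<Sum>n\<in>snd ` S. (cmod (g n))\<^sup>2 + (cmod ((adjZ ^^ k) h n))\<^sup>2) =
              (\<Sum>n\<in>snd ` S. (cmod (g n))\<^sup>2) + (\<Sum>n\<in>snd ` S. (cmod ((adjZ ^^ k) h n))\<^sup>2)"
          by (rule sum.distrib)
        also have "\<dots> \<le> l2norm_sq g + l2norm_sq ((adjZ ^^ k) h)"
          using g hk(1)[of k] fin unfolding in_l2_def l2norm_sq_def
          by (intro add_mono finite_sum_le_infsum) auto
        also have "\<dots> \<le> l2norm_sq g + D ^ k * l2norm_sq h" using hk(2)[of k] by simp
        finally show "(\<Sum>n\<in>snd ` S. (cmod (g n))\<^sup>2 + (cmod ((adjZ ^^ k) h n))\<^sup>2) \<le> l2norm_sq g + D ^ k * l2norm_sq h" .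
      qed simp
      also have "\<dots> \<le> (\<Sum>k. norm (cf s k) * (l2norm_sq g + D ^ k * l2norm_sq h))"
        by (rule sum_le_suminf[OF sG]) (use fin in \<open>auto intro!: mult_nonneg_nonneg add_nonneg_nonneg l2norm_nonneg simp: D_def\<close>)
      finally show "sum (\<lambda>(k,n). G k n) S \<le> (\<Sum>k. norm (cf s k) * (l2norm_sq g + D ^ k * l2norm_sq h))" .
    qed
  qed
  have FS: "(\<lambda>(k,n). F k n) summable_on UNIV"
    unfolding summable_on_iff_abs_summable_on_complex
    by (rule summable_on_comparison_test[OF GS]) (auto simp: FG)
  have FS2: "(\<lambda>(n,k). F k n) summable_on (UNIV \<times> UNIV)"
    using FS summable_on_swap[of "\<lambda>(k,n). F k n" UNIV UNIV] by (simp add: case_prod_unfold)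
  have row: "(\<lambda>k. F k n) summable_on UNIV" for n
    using summable_on_SigmaD1[where f="\<lambda>n k. F k n", of UNIV "\<lambda>_. UNIV" n] FS2 by simp
  have outer: "(\<lambda>k. infsum (\<lambda>n. F k n) UNIV) summable_on UNIV"
    using FS by (intro summable_on_Sigma_banach) simp
  have inf_k: "infsum (\<lambda>n. F k n) UNIV = cf s k * l2inner g ((adjZ ^^ k) h)" for k
    unfolding F_def l2inner_def by (rule infsum_cmult_right')
  have "l2inner g (evolZ s h) = infsum (\<lambda>n. \<Sum>k. F k n) UNIV"
    unfolding l2inner_def evolZ_cf F_def
    by (intro infsum_cong, subst suminf_mult[symmetric])
       (auto intro: evol_summable in_l2_bnd h simp: mult.left_commute)
  also have "\<dots> = infsum (\<lambda>n. infsum (\<lambda>k. F k n) UNIV) UNIV"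
    by (simp add: infsum_suminf_c row)
  also have "\<dots> = infsum (\<lambda>k. infsum (\<lambda>n. F k n) UNIV) UNIV"
    using FS by (intro infsum_swap_banach[symmetric]) simp
  also have "\<dots> = (\<Sum>k. infsum (\<lambda>n. F k n) UNIV)"
    by (rule infsum_suminf_c[OF outer])
  finally show "l2inner g (evolZ s h) = (\<Sum>k. cf s k * l2inner g ((adjZ ^^ k) h))"
    by (simp add: inf_k)
  show "summable (\<lambda>k. cf s k * l2inner g ((adjZ ^^ k) h))"
    using summable_on_imp_summable[OF outer] by (simp add: inf_k)
qed

lemma adjZ_expand: "adjZ f = (\<lambda>n. \<Sum>i\<in>UNIV. f (n - axis i 1) + f (n + axis i 1))"
  by (rule ext) (simp add: adjZ_def)

lemma l2inner_adjZ_right: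
  assumes "in_l2 h" "in_l2 f"
  shows "l2inner h (adjZ f) = (\<Sum>i\<in>UNIV. l2inner h (\<lambda>n. f (n - axis i 1)) + l2inner h (\<lambda>n. f (n + axis i 1)))"
proof -
  have "l2inner h (adjZ f) = (\<Sum>i\<in>UNIV. l2inner h (\<lambda>n. f (n - axis i 1) + f (n + axis i 1)))"
    unfolding adjZ_expand[of f] using assms
    by (intro l2inner_sum2) (auto intro: in_l2_add in_l2_shift in_l2_shift')
  also have "\<dots> = (\<Sum>i\<in>UNIV. l2inner h (\<lambda>n. f (n - axis i 1)) + l2inner h (\<lambda>n. f (n + axis i 1)))"
    using assms by (intro sum.cong refl l2inner_add2) (auto intro: in_l2_shift in_l2_shift')
  finally show ?thesis .
qed

lemma adjZ_selfadj:
  assumes f: "in_l2 f" and h: "in_l2 h"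
  shows "l2inner (adjZ f) h = l2inner f (adjZ h)"
proof -
  have e: "cnj (l2inner h X) = l2inner X h" for X by (simp add: l2inner_cnj[of _ h])
  have "l2inner (adjZ f) h = cnj (l2inner h (adjZ f))" by (rule l2inner_cnj)
  also have "\<dots> = (\<Sum>i\<in>UNIV. l2inner (\<lambda>n. f (n - axis i 1)) h + l2inner (\<lambda>n. f (n + axis i 1)) h)"
    by (simp add: l2inner_adjZ_right[OF h f] e)
  also have "\<dots> = (\<Sum>i\<in>UNIV. l2inner f (\<lambda>n. h (n - axis i 1)) + l2inner f (\<lambda>n. h (n + axis i 1)))"
    by (simp add: l2inner_shift l2inner_shift' add.commute)
  also have "\<dots> = l2inner f (adjZ h)" by (rule l2inner_adjZ_right[OF f h, symmetric])
  finally show ?thesis .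
qed

lemma adjZk_selfadj:
  fixes f h :: "int^'d \<Rightarrow> complex"
  assumes f: "in_l2 f" and h: "in_l2 h"
  shows "l2inner ((adjZ ^^ k) f) h = l2inner f ((adjZ ^^ k) h)"
  using h
proof (induction k arbitrary: h)
  case 0 thus ?case by simp
next
  case (Suc k)
  have "l2inner ((adjZ ^^ Suc k) f) h = l2inner ((adjZ ^^ k) f) (adjZ h)"
    using l2_adjZk[OF f, of k] Suc.prems by (simp add: adjZ_selfadj)
  also have "\<dots> = l2inner f ((adjZ ^^ k) (adjZ h))"
    using Suc.IH[of "adjZ h"] l2_adjZ(1)[OF Suc.prems] by simp
  finally show ?case by (simp add: funpow_swap1)
qed

lemma cnj_cf: "cnj (cf t k) = cf (-t) k"
  by (simp add: cf_def)

lemma evol_adjoint: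
  fixes f h :: "int^'d \<Rightarrow> complex"
  assumes f: "in_l2 f" and h: "in_l2 h"
  shows "l2inner (evolZ t f) h = l2inner f (evolZ (-t) h)"
proof -
  have "l2inner (evolZ t f) h = cnj (l2inner h (evolZ t f))" by (rule l2inner_cnj)
  also have "\<dots> = cnj (\<Sum>k. cf t k * l2inner h ((adjZ ^^ k) f))" by (simp add: inner_evol(2)[OF h f])
  also have "\<dots> = (\<Sum>k. cnj (cf t k * l2inner h ((adjZ ^^ k) f)))"
    using sums_cnj[THEN iffD2, OF summable_sums[OF inner_evol(1)[OF h f, of t]]] by (simp add: sums_iff)
  also have "\<dots> = (\<Sum>k. cf (-t) k * l2inner f ((adjZ ^^ k) h))"
    by (simp add: cnj_cf l2inner_cnj[of _ h, symmetric] adjZk_selfadj[OF f h])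
  also have "\<dots> = l2inner f (evolZ (-t) h)" by (rule inner_evol(2)[OF f h, symmetric])
  finally show ?thesis .
qed

lemma evol_unitary:
  fixes f g :: "int^'d \<Rightarrow> complex"
  assumes f: "in_l2 f" and g: "in_l2 g"
  shows "l2inner (evolZ t f) (evolZ t g) = l2inner f g"
proof -
  have "l2inner (evolZ t f) (evolZ t g) = l2inner f (evolZ (-t) (evolZ t g))"
    by (rule evol_adjoint[OF f evol_l2[OF g]])
  also have "evolZ (-t) (evolZ t g) = g"
    by (rule ext) (rule evol_inverse[OF in_l2_bnd[OF g]])
  finally show ?thesis .
qed


definition wH :: "'d \<Rightarrow> nat \<Rightarrow> int^'d \<Rightarrow> real" where
  "wH j b n = (1 + \<bar>real_of_int (n $ j)\<bar>) ^ (2 * b)"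

definition inH :: "'d \<Rightarrow> nat \<Rightarrow> (int^'d \<Rightarrow> complex) \<Rightarrow> bool" where
  "inH j b f \<longleftrightarrow> (\<lambda>n. wH j b n * (cmod (f n))\<^sup>2) summable_on UNIV"

lemma wH_ge1: "1 \<le> wH j b n"
  unfolding wH_def by (rule one_le_power) simp

lemma H_l2: "inH j b f \<Longrightarrow> in_l2 f"
  unfolding inH_def in_l2_def
  by (rule summable_on_comparison_test) (auto intro: mult_le_cancel_right1[THEN iffD2] wH_ge1 simp: wH_ge1)

lemma wH_mono: "wH j b n \<le> wH j (Suc b) n"
  unfolding wH_def by (rule power_increasing) auto

lemma H_mono: "inH j (Suc b) f \<Longrightarrow> inH j b f"
  unfolding inH_def
  by (rule summable_on_comparison_test) (auto intro: mult_right_mono wH_mono simp: order_trans[OF _ wH_ge1])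

lemma H_X: "inH j (Suc b) f \<Longrightarrow> inH j b (Xop j f)"
  unfolding inH_def
proof (rule summable_on_comparison_test)
  fix n
  have "wH j b n * (cmod (Xop j f n))\<^sup>2 = (wH j b n * (\<bar>real_of_int (n $ j)\<bar>)\<^sup>2) * (cmod (f n))\<^sup>2"
    by (simp add: Xop_def norm_mult power_mult_distrib)
  also have "\<dots> \<le> wH j (Suc b) n * (cmod (f n))\<^sup>2"
  proof (rule mult_right_mono)
    have "(\<bar>real_of_int (n $ j)\<bar>)\<^sup>2 \<le> (1 + \<bar>real_of_int (n $ j)\<bar>)\<^sup>2"
      by (rule power_mono) auto
    hence "wH j b n * (\<bar>real_of_int (n $ j)\<bar>)\<^sup>2 \<le> wH j b n * (1 + \<bar>real_of_int (n $ j)\<bar>)\<^sup>2"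
      by (rule mult_left_mono) (simp add: order_trans[OF _ wH_ge1])
    also have "\<dots> = wH j (Suc b) n" by (simp add: wH_def power_add[symmetric])
    finally show "wH j b n * (\<bar>real_of_int (n $ j)\<bar>)\<^sup>2 \<le> wH j (Suc b) n" .
  qed simp
  finally show "wH j b n * (cmod (Xop j f n))\<^sup>2 \<le> wH j (Suc b) n * (cmod (f n))\<^sup>2" .
qed (auto simp: order_trans[OF _ wH_ge1])

lemma wH_shift:
  assumes "\<bar>v $ j\<bar> \<le> 1"
  shows "wH j b n \<le> 4 ^ b * wH j b (n + v)"
proof -
  have vj: "\<bar>real_of_int (v $ j)\<bar> \<le> 1" using assms by (metis of_int_abs of_int_le_1_iff)
  have "1 + \<bar>real_of_int (n $ j)\<bar> \<le> 2 * (1 + \<bar>real_of_int ((n + v) $ j)\<bar>)"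
  proof -
    have "\<bar>real_of_int (n $ j)\<bar> \<le> \<bar>real_of_int (n $ j) + real_of_int (v $ j)\<bar> + \<bar>real_of_int (v $ j)\<bar>"
      using abs_triangle_ineq[of "real_of_int (n $ j) + real_of_int (v $ j)" "- real_of_int (v $ j)"] by simp
    moreover have "0 \<le> \<bar>real_of_int (n $ j) + real_of_int (v $ j)\<bar>" by simp
    ultimately show ?thesis using vj by (simp only: of_int_add vector_add_component) (smt (verit))
  qed
  hence "(1 + \<bar>real_of_int (n $ j)\<bar>) ^ (2 * b) \<le> (2 * (1 + \<bar>real_of_int ((n + v) $ j)\<bar>)) ^ (2 * b)"
    by (rule power_mono) simp
  also have "\<dots> = 4 ^ b * (1 + \<bar>real_of_int ((n + v) $ j)\<bar>) ^ (2 * b)"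
  proof -
    have "(2 * y) ^ (2 * b) = 4 ^ b * y ^ (2 * b)" for y :: real
      by (simp add: power_mult_distrib power_mult)
    thus ?thesis by blast
  qed
  finally show ?thesis by (simp add: wH_def)
qed

lemma H_shift:
  assumes "inH j b f" "\<bar>v $ j\<bar> \<le> 1"
  shows "inH j b (\<lambda>n. f (n + v))"
  unfolding inH_def
proof (rule summable_on_comparison_test)
  show "(\<lambda>n. 4 ^ b * (wH j b (n + v) * (cmod (f (n + v)))\<^sup>2)) summable_on UNIV"
    using assms(1) unfolding inH_def
    by (intro summable_on_cmult_right) (simp add: summable_shift[of "\<lambda>n. wH j b n * (cmod (f n))\<^sup>2"])
  fix n
  show "wH j b n * (cmod (f (n + v)))\<^sup>2 \<le> 4 ^ b * (wH j b (n + v) * (cmod (f (n + v)))\<^sup>2)"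
    using wH_shift[OF assms(2), of b n] by (simp add: mult.assoc[symmetric] mult_right_mono)
qed (auto simp: order_trans[OF _ wH_ge1])

lemma H_shiftp: "inH j b f \<Longrightarrow> inH j b (\<lambda>n. f (n + axis j 1))"
  by (rule H_shift) (auto simp: axis_def)

lemma H_shiftm: "inH j b f \<Longrightarrow> inH j b (\<lambda>n. f (n - axis j 1))"
  using H_shift[of j b f "- axis j 1"] by (simp add: axis_def)

lemma H_add: "inH j b f \<Longrightarrow> inH j b g \<Longrightarrow> inH j b (\<lambda>n. f n + g n)"
  unfolding inH_def
proof (rule summable_on_comparison_test)
  assume "(\<lambda>n. wH j b n * (cmod (f n))\<^sup>2) summable_on UNIV" "(\<lambda>n. wH j b n * (cmod (g n))\<^sup>2) summable_on UNIV"
  thus "(\<lambda>n. 2 * (wH j b n * (cmod (f n))\<^sup>2) + 2 * (wH j b n * (cmod (g n))\<^sup>2)) summable_on UNIV"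
    by (intro summable_on_add summable_on_cmult_right)
  fix n
  have "wH j b n * (cmod (f n + g n))\<^sup>2 \<le> wH j b n * (2 * (cmod (f n))\<^sup>2 + 2 * (cmod (g n))\<^sup>2)"
    by (rule mult_left_mono[OF cmod_add_sq]) (simp add: order_trans[OF _ wH_ge1])
  thus "wH j b n * (cmod (f n + g n))\<^sup>2 \<le> 2 * (wH j b n * (cmod (f n))\<^sup>2) + 2 * (wH j b n * (cmod (g n))\<^sup>2)"
    by (simp add: algebra_simps)
qed (auto simp: order_trans[OF _ wH_ge1])

lemma H_cmult: "inH j b f \<Longrightarrow> inH j b (\<lambda>n. c * f n)"
  unfolding inH_def
  by (drule summable_on_cmult_right[where c="(cmod c)\<^sup>2"]) (simp add: norm_mult power_mult_distrib algebra_simps)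

lemma H_zero: "inH j b (\<lambda>n. 0)"
  unfolding inH_def by simp

lemma H_Wop: "inH j b f \<Longrightarrow> inH j b (Wop j f)"
proof -
  assume "inH j b f"
  hence "inH j b (\<lambda>n. f (n - axis j 1) + (-1) * f (n + axis j 1))"
    by (intro H_add H_cmult H_shiftp H_shiftm)
  thus ?thesis by (simp add: Wop_def[abs_def])
qed

lemma pow_bound: "(1 + \<bar>x::real\<bar>) ^ (2 * m) \<le> 4 ^ m * (1 + \<bar>x\<bar> ^ (2 * m))"
proof (cases "\<bar>x\<bar> \<le> 1")
  case True
  have "(1 + \<bar>x\<bar>) ^ (2 * m) \<le> 2 ^ (2 * m)" by (rule power_mono) (use True in auto)
  also have "\<dots> = 4 ^ m" by (simp add: power_mult)
  also have "\<dots> \<le> 4 ^ m * (1 + \<bar>x\<bar> ^ (2 * m))" by simp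
  finally show ?thesis .
next
  case False
  have "(1 + \<bar>x\<bar>) ^ (2 * m) \<le> (2 * \<bar>x\<bar>) ^ (2 * m)" by (rule power_mono) (use False in auto)
  also have "\<dots> = 4 ^ m * \<bar>x\<bar> ^ (2 * m)" by (simp add: power_mult_distrib power_mult)
  also have "\<dots> \<le> 4 ^ m * (1 + \<bar>x\<bar> ^ (2 * m))" by simp
  finally show ?thesis .
qed

lemma H_init:
  fixes \<psi> :: "int^'d \<Rightarrow> complex"
  assumes "in_l2 \<psi>" "moment_dens m \<psi> summable_on UNIV"
  shows "inH j m \<psi>"
  unfolding inH_def
proof (rule summable_on_comparison_test)
  show "(\<lambda>n. 4 ^ m * ((cmod (\<psi> n))\<^sup>2 + moment_dens m \<psi> n)) summable_on UNIV"
    using assms unfolding in_l2_def by (intro summable_on_cmult_right summable_on_add)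
  fix n
  have md: "\<bar>real_of_int (n $ j)\<bar> ^ (2 * m) * (cmod (\<psi> n))\<^sup>2 \<le> moment_dens m \<psi> n"
    unfolding moment_dens_def
    by (rule member_le_sum[of j UNIV "\<lambda>j. \<bar>real_of_int (n $ j)\<bar> ^ (2 * m) * (cmod (\<psi> n))\<^sup>2"]) auto
  have "wH j m n * (cmod (\<psi> n))\<^sup>2 \<le> 4 ^ m * (1 + \<bar>real_of_int (n $ j)\<bar> ^ (2 * m)) * (cmod (\<psi> n))\<^sup>2"
    unfolding wH_def by (rule mult_right_mono[OF pow_bound]) simp
  also have "\<dots> = 4 ^ m * ((cmod (\<psi> n))\<^sup>2 + \<bar>real_of_int (n $ j)\<bar> ^ (2 * m) * (cmod (\<psi> n))\<^sup>2)"
    by (simp add: algebra_simps)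
  also have "\<dots> \<le> 4 ^ m * ((cmod (\<psi> n))\<^sup>2 + moment_dens m \<psi> n)"
    using md by simp
  finally show "wH j m n * (cmod (\<psi> n))\<^sup>2 \<le> 4 ^ m * ((cmod (\<psi> n))\<^sup>2 + moment_dens m \<psi> n)" .
qed (auto simp: order_trans[OF _ wH_ge1])

fun phi :: "'d \<Rightarrow> (int^'d \<Rightarrow> complex) \<Rightarrow> nat \<Rightarrow> nat \<Rightarrow> (int^'d \<Rightarrow> complex)" where
  "phi j \<psi> 0 k = (if k = 0 then \<psi> else (\<lambda>n. 0))"
| "phi j \<psi> (Suc a) 0 = Xop j (phi j \<psi> a 0)"
| "phi j \<psi> (Suc a) (Suc k) = (\<lambda>n. Xop j (phi j \<psi> a (Suc k)) n + Wop j (phi j \<psi> a k) n)"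

lemma Xop_zero: "Xop j (\<lambda>n. 0) = (\<lambda>n. 0)"
  by (rule ext) (simp add: Xop_def)

lemma Wop_zero: "Wop j (\<lambda>n. 0) = (\<lambda>n. 0)"
  by (rule ext) (simp add: Wop_def)

lemma phi_zero: "a < k \<Longrightarrow> phi j \<psi> a k = (\<lambda>n. 0)"
proof (induction a arbitrary: k)
  case 0 thus ?case by simp
next
  case (Suc a)
  then obtain k' where k: "k = Suc k'" "a < k'" by (cases k) auto
  thus ?case using Suc.IH[of k'] Suc.IH[of "Suc k'"] by (simp add: Xop_zero Wop_zero)
qed

lemma phi_top: "phi j \<psi> a a = (Wop j ^^ a) \<psi>"
proof (induction a)
  case 0 thus ?case by simp
next
  case (Suc a) thus ?case by (simp add: phi_zero Xop_zero)
qed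

lemma phi_H: "inH j m \<psi> \<Longrightarrow> a \<le> m \<Longrightarrow> inH j (m - a) (phi j \<psi> a k)"
proof (induction a arbitrary: k)
  case 0 thus ?case by (simp add: H_zero)
next
  case (Suc a)
  have m: "m - a = Suc (m - Suc a)" using Suc.prems by simp
  have ih: "inH j (Suc (m - Suc a)) (phi j \<psi> a k')" for k'
    using Suc.IH[of k'] Suc.prems m by simp
  show ?case
  proof (cases k)
    case 0 thus ?thesis using H_X[OF ih] by simp
  next
    case (Suc k') thus ?thesis
      using H_X[OF ih] H_mono[OF H_Wop[OF ih]] by (simp add: H_add)
  qed
qed

lemma evol_zero: "evolZ t (\<lambda>n. 0) n = 0"
  by (simp add: evolZ_def adjZk_zero)

lemma Xpow_evol:
  fixes \<psi> :: "int^'d \<Rightarrow> complex"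
  assumes H: "inH j m \<psi>"
  shows "a \<le> m \<Longrightarrow> of_int (n $ j) ^ a * evolZ t \<psi> n = (\<Sum>k\<le>a. (\<i> * complex_of_real t) ^ k * evolZ t (phi j \<psi> a k) n)"
proof (induction a)
  case 0 thus ?case by simp
next
  case (Suc a)
  define c where "c = \<i> * complex_of_real t"
  have am: "a \<le> m" "m - a = Suc (m - Suc a)" using Suc.prems by auto
  have B1: "bnd (phi j \<psi> a k)" for k using phi_H[OF H am(1), of k] by (intro in_l2_bnd H_l2)
  have B2: "bnd (Xop j (phi j \<psi> a k))" for k
    using phi_H[OF H am(1), of k] am(2) by (intro in_l2_bnd H_l2[of j "m - Suc a"] H_X) simp
  have B3: "bnd (Wop j (phi j \<psi> a k))" for k using B1 by (rule bnd_Wop)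
  have "of_int (n $ j) ^ Suc a * evolZ t \<psi> n = of_int (n $ j) * (of_int (n $ j) ^ a * evolZ t \<psi> n)"
    by simp
  also have "\<dots> = of_int (n $ j) * (\<Sum>k\<le>a. c ^ k * evolZ t (phi j \<psi> a k) n)"
    using Suc.IH am(1) by (simp add: c_def)
  also have "\<dots> = (\<Sum>k\<le>a. c ^ k * Xop j (evolZ t (phi j \<psi> a k)) n)"
    by (simp add: Xop_def sum_distrib_left mult.left_commute)
  also have "\<dots> = (\<Sum>k\<le>a. c ^ k * evolZ t (Xop j (phi j \<psi> a k)) n) + (\<Sum>k\<le>a. c ^ Suc k * evolZ t (Wop j (phi j \<psi> a k)) n)"
    by (simp add: evol_Xop[OF B1 B2] c_def distrib_left sum.distrib mult_ac)
  also have "(\<Sum>k\<le>a. c ^ k * evolZ t (Xop j (phi j \<psi> a k)) n) = (\<Sum>k\<le>Suc a. c ^ k * evolZ t (Xop j (phi j \<psi> a k)) n)"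
    by (simp add: phi_zero Xop_zero evol_zero)
  also have "\<dots> = evolZ t (Xop j (phi j \<psi> a 0)) n + (\<Sum>k\<le>a. c ^ Suc k * evolZ t (Xop j (phi j \<psi> a (Suc k))) n)"
    by (subst sum.atMost_Suc_shift) simp
  also have "\<dots> + (\<Sum>k\<le>a. c ^ Suc k * evolZ t (Wop j (phi j \<psi> a k)) n) =
      evolZ t (phi j \<psi> (Suc a) 0) n + (\<Sum>k\<le>a. c ^ Suc k * evolZ t (phi j \<psi> (Suc a) (Suc k)) n)"
    by (simp add: evol_add[OF B2 B3] distrib_left sum.distrib)
  also have "\<dots> = (\<Sum>k\<le>Suc a. c ^ k * evolZ t (phi j \<psi> (Suc a) k) n)"
    by (subst sum.atMost_Suc_shift) simp
  finally show ?case by (simp add: c_def)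
qed


lemma Wop_expand: "Wop j f = (\<lambda>n. f (n - axis j 1) - f (n + axis j 1))"
  by (rule ext) (simp add: Wop_def)

lemma in_l2_Wop: "in_l2 f \<Longrightarrow> in_l2 (Wop j f)"
  unfolding Wop_expand by (intro in_l2_diff in_l2_shift in_l2_shift')

lemma in_l2_Wopk: "in_l2 f \<Longrightarrow> in_l2 ((Wop j ^^ a) f)"
  by (induction a) (simp_all add: in_l2_Wop)

lemma Wop_adj:
  assumes f: "in_l2 f" and g: "in_l2 g"
  shows "l2inner (Wop j f) g = - l2inner f (Wop j g)"
proof -
  have e: "cnj (l2inner g X) = l2inner X g" for X by (simp add: l2inner_cnj[of _ g])
  have "l2inner (Wop j f) g = cnj (l2inner g (Wop j f))" by (rule l2inner_cnj)
  also have "\<dots> = cnj (l2inner g (\<lambda>n. f (n - axis j 1)) - l2inner g (\<lambda>n. f (n + axis j 1)))"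
    unfolding Wop_expand using f g by (subst l2inner_diff2) (auto intro: in_l2_shift in_l2_shift')
  also have "\<dots> = l2inner f (\<lambda>n. g (n + axis j 1)) - l2inner f (\<lambda>n. g (n - axis j 1))"
    by (simp add: e l2inner_shift l2inner_shift')
  also have "\<dots> = - l2inner f (Wop j g)"
    unfolding Wop_expand using f g by (subst l2inner_diff2) (auto intro: in_l2_shift in_l2_shift')
  finally show ?thesis .
qed

lemma Wopk_adj:
  assumes f: "in_l2 f" and g: "in_l2 g"
  shows "l2inner ((Wop j ^^ a) f) g = (-1) ^ a * l2inner f ((Wop j ^^ a) g)"
  using g
proof (induction a arbitrary: g)
  case 0 thus ?case by simp
next
  case (Suc a)
  have "l2inner ((Wop j ^^ Suc a) f) g = - l2inner ((Wop j ^^ a) f) (Wop j g)"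
    using Wop_adj[OF in_l2_Wopk[OF f] Suc.prems] by simp
  also have "\<dots> = - ((-1) ^ a * l2inner f ((Wop j ^^ a) (Wop j g)))"
    using Suc.IH[OF in_l2_Wop[OF Suc.prems]] by simp
  finally show ?case by (simp add: funpow_swap1)
qed

lemma axis_int_add: "axis j (a::int) + axis j b = axis j (a + b)"
  by (simp add: axis_def vec_eq_iff)

lemma axis_zero_int: "axis j (0::int) = 0"
  by (simp add: axis_def vec_eq_iff)

lemma Wopk_closed:
  "(Wop j ^^ k) f n = (\<Sum>q\<le>k. of_nat (k choose q) * (-1) ^ q * f (n - axis j (int k - 2 * int q)))"
proof (induction k arbitrary: n)
  case 0 thus ?case by (simp add: axis_zero_int)
next
  case (Suc k)
  define g where "g q = (-1) ^ q * f (n - axis j (int (Suc k) - 2 * int q))" for q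
  have A: "(Wop j ^^ Suc k) f n = (\<Sum>q\<le>k. of_nat (k choose q) * g q) + (\<Sum>q\<le>k. of_nat (k choose q) * g (Suc q))"
  proof -
    have "(Wop j ^^ Suc k) f n = (Wop j ^^ k) f (n - axis j 1) - (Wop j ^^ k) f (n + axis j 1)"
      by (simp add: Wop_def)
    also have "\<dots> = (\<Sum>q\<le>k. of_nat (k choose q) * (-1) ^ q * f (n - axis j 1 - axis j (int k - 2 * int q)))
                   - (\<Sum>q\<le>k. of_nat (k choose q) * (-1) ^ q * f (n + axis j 1 - axis j (int k - 2 * int q)))"
      by (simp add: Suc.IH)
    also have "\<dots> = (\<Sum>q\<le>k. of_nat (k choose q) * g q) + (\<Sum>q\<le>k. of_nat (k choose q) * g (Suc q))"
    proof -
      have e1: "n - axis j 1 - axis j (int k - 2 * int q) = n - axis j (int (Suc k) - 2 * int q)" for q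
        by (simp add: diff_diff_eq axis_int_add algebra_simps)
      have e2: "n + axis j 1 - axis j (int k - 2 * int q) = n - axis j (int (Suc k) - 2 * int (Suc q))" for q
        by (simp add: axis_def vec_eq_iff algebra_simps)
      have S1: "(\<Sum>q\<le>k. of_nat (k choose q) * (-1) ^ q * f (n - axis j 1 - axis j (int k - 2 * int q)))
           = (\<Sum>q\<le>k. of_nat (k choose q) * g q)"
        by (rule sum.cong) (simp_all only: g_def e1 mult.assoc)
      have S2: "(\<Sum>q\<le>k. of_nat (k choose q) * (-1) ^ q * f (n + axis j 1 - axis j (int k - 2 * int q)))
           = (\<Sum>q\<le>k. - (of_nat (k choose q) * g (Suc q)))"
      proof (rule sum.cong)
        fix q assume "q \<in> {..k}"
        show "of_nat (k choose q) * (-1) ^ q * f (n + axis j 1 - axis j (int k - 2 * int q)) = - (of_nat (k choose q) * g (Suc q))"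
          unfolding g_def e2 by simp
      qed simp
      show ?thesis unfolding S1 S2 by (simp add: sum_negf)
    qed
    finally show ?thesis .
  qed
  have "(\<Sum>q\<le>Suc k. of_nat (Suc k choose q) * g q) = g 0 + (\<Sum>q\<le>k. of_nat (Suc k choose Suc q) * g (Suc q))"
    by (subst sum.atMost_Suc_shift) simp
  also have "\<dots> = g 0 + (\<Sum>q\<le>k. of_nat (k choose Suc q) * g (Suc q)) + (\<Sum>q\<le>k. of_nat (k choose q) * g (Suc q))"
    by (simp add: sum.distrib distrib_right)
  also have "g 0 + (\<Sum>q\<le>k. of_nat (k choose Suc q) * g (Suc q)) = (\<Sum>q\<le>Suc k. of_nat (k choose q) * g q)"
    by (subst sum.atMost_Suc_shift) simp
  also have "\<dots> = (\<Sum>q\<le>k. of_nat (k choose q) * g q)"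
    by simp
  finally have B: "(\<Sum>q\<le>Suc k. of_nat (Suc k choose q) * g q) =
      (\<Sum>q\<le>k. of_nat (k choose q) * g q) + (\<Sum>q\<le>k. of_nat (k choose q) * g (Suc q))" .
  show ?case using A B by (simp add: g_def mult.assoc)
qed

lemma Wop_norm:
  assumes f: "in_l2 f"
  shows "l2norm_sq (Wop j f) \<le> 4 * l2norm_sq f"
proof -
  have s1: "(\<lambda>n. 2 * (cmod (f (n - axis j 1)))\<^sup>2) summable_on UNIV"
    using in_l2_shift'[OF f, of "axis j 1"] unfolding in_l2_def by (rule summable_on_cmult_right)
  have s2: "(\<lambda>n. 2 * (cmod (f (n + axis j 1)))\<^sup>2) summable_on UNIV"
    using in_l2_shift[OF f, of "axis j 1"] unfolding in_l2_def by (rule summable_on_cmult_right)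
  have "l2norm_sq (Wop j f) \<le> infsum (\<lambda>n. 2 * (cmod (f (n - axis j 1)))\<^sup>2 + 2 * (cmod (f (n + axis j 1)))\<^sup>2) UNIV"
    unfolding l2norm_sq_def
    using in_l2_Wop[OF f] s1 s2 unfolding in_l2_def
    by (intro infsum_mono summable_on_add) (auto simp: Wop_def cmod_diff_sq)
  also have "\<dots> = 2 * l2norm_sq f + 2 * l2norm_sq f"
    using s1 s2 unfolding l2norm_sq_def
    by (simp add: infsum_add infsum_cmult_right' infsum_shift'[of "\<lambda>n. (cmod (f n))\<^sup>2"]
          infsum_shift[of "\<lambda>n. (cmod (f n))\<^sup>2"])
  finally show ?thesis by simp
qed

lemma Wopk_norm:
  assumes f: "in_l2 f"
  shows "l2norm_sq ((Wop j ^^ a) f) \<le> 4 ^ a * l2norm_sq f"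
proof (induction a)
  case 0 thus ?case by simp
next
  case (Suc a)
  have "l2norm_sq ((Wop j ^^ Suc a) f) \<le> 4 * l2norm_sq ((Wop j ^^ a) f)"
    using Wop_norm[OF in_l2_Wopk[OF f]] by simp
  also have "\<dots> \<le> 4 * (4 ^ a * l2norm_sq f)" using Suc by simp
  finally show ?case by simp
qed

lemma l2norm_pos:
  assumes f: "in_l2 f" and nz: "f \<noteq> (\<lambda>_. 0)"
  shows "0 < l2norm_sq f"
proof -
  obtain n where "f n \<noteq> 0" using nz by auto
  hence "0 < (cmod (f n))\<^sup>2" by simp
  also have "\<dots> \<le> l2norm_sq f" by (rule l2_point[OF f])
  finally show ?thesis .
qed

lemma Wop_inj:
  assumes f: "in_l2 f" and W0: "Wop j f = (\<lambda>_. 0)"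
  shows "f = (\<lambda>_. 0)"
proof (rule ccontr)
  assume "f \<noteq> (\<lambda>_. 0)"
  then obtain x where fx: "f x \<noteq> 0" by auto
  define p where "p k = x + axis j (2 * int k)" for k :: nat
  have step: "f (y + axis j 2) = f y" for y
  proof -
    have "Wop j f (y + axis j 1) = 0" using W0 by simp
    moreover have "y + axis j 1 - axis j 1 = y" by simp
    moreover have "y + axis j 1 + axis j 1 = y + axis j 2" by (simp add: axis_int_add add.assoc)
    ultimately show ?thesis by (simp add: Wop_def)
  qed
  have pk: "f (p k) = f x" for k
  proof (induction k)
    case 0 thus ?case by (simp add: p_def axis_zero_int)
  next
    case (Suc k)
    have "p (Suc k) = p k + axis j 2" by (simp add: p_def add.assoc axis_int_add algebra_simps)
    thus ?case using Suc step by simp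
  qed
  have inj: "inj p"
  proof (rule injI)
    fix a b assume "p a = p b"
    hence "p a $ j = p b $ j" by simp
    thus "a = b" by (simp add: p_def axis_def)
  qed
  have "(\<lambda>n. (cmod (f n))\<^sup>2) summable_on (p ` UNIV)"
    using f unfolding in_l2_def by (rule summable_on_subset) simp
  hence "((\<lambda>n. (cmod (f n))\<^sup>2) \<circ> p) summable_on UNIV"
    using summable_on_reindex[OF inj_on_subset[OF inj subset_UNIV]] by blast
  hence "(\<lambda>_::nat. (cmod (f x))\<^sup>2) summable_on UNIV"
    by (simp add: o_def pk)
  moreover have "(cmod (f x))\<^sup>2 \<noteq> 0" using fx by simp
  ultimately show False using infsum_diverge_constant[of "UNIV :: nat set"] by blast
qed

lemma Wopk_nz:
  assumes f: "in_l2 f" and nz: "f \<noteq> (\<lambda>_. 0)"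
  shows "(Wop j ^^ a) f \<noteq> (\<lambda>_. 0)"
proof (induction a)
  case 0 thus ?case using nz by simp
next
  case (Suc a) thus ?case using Wop_inj[OF in_l2_Wopk[OF f, where j=j and a=a]] by auto
qed


lemma l2inner_sums:
  assumes "finite K" "finite L" "\<And>k. k \<in> K \<Longrightarrow> in_l2 (F k)" "\<And>l. l \<in> L \<Longrightarrow> in_l2 (G l)"
  shows "l2inner (\<lambda>n. \<Sum>k\<in>K. a k * F k n) (\<lambda>n. \<Sum>l\<in>L. b l * G l n)
       = (\<Sum>k\<in>K. \<Sum>l\<in>L. cnj (a k) * b l * l2inner (F k) (G l))"
proof -
  have X: "in_l2 (\<lambda>n. \<Sum>k\<in>K. a k * F k n)" using assms by (intro in_l2_sum in_l2_cmult) auto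
  have e: "cnj (l2inner g X) = l2inner X g" for g X by (simp add: l2inner_cnj[of X g])
  have inner: "l2inner (\<lambda>n. \<Sum>k\<in>K. a k * F k n) (G l) = (\<Sum>k\<in>K. cnj (a k) * l2inner (F k) (G l))" if l: "l \<in> L" for l
  proof -
    have "l2inner (G l) (\<lambda>n. \<Sum>k\<in>K. a k * F k n) = (\<Sum>k\<in>K. a k * l2inner (G l) (F k))"
      using assms l by (subst l2inner_sum2) (auto intro: in_l2_cmult simp: l2inner_cmult2)
    hence "cnj (l2inner (G l) (\<lambda>n. \<Sum>k\<in>K. a k * F k n)) = (\<Sum>k\<in>K. cnj (a k) * cnj (l2inner (G l) (F k)))"
      by simp
    thus ?thesis by (simp add: e)
  qed
  have "l2inner (\<lambda>n. \<Sum>k\<in>K. a k * F k n) (\<lambda>n. \<Sum>l\<in>L. b l * G l n)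
      = (\<Sum>l\<in>L. b l * l2inner (\<lambda>n. \<Sum>k\<in>K. a k * F k n) (G l))"
    using assms X by (subst l2inner_sum2) (auto intro: in_l2_cmult simp: l2inner_cmult2)
  also have "\<dots> = (\<Sum>l\<in>L. b l * (\<Sum>k\<in>K. cnj (a k) * l2inner (F k) (G l)))"
    by (intro sum.cong refl) (simp add: inner)
  also have "\<dots> = (\<Sum>k\<in>K. \<Sum>l\<in>L. cnj (a k) * b l * l2inner (F k) (G l))"
    by (subst sum.swap) (simp add: sum_distrib_left mult_ac)
  finally show ?thesis .
qed

lemma pow_ratio_lim:
  assumes "k \<le> m" "l \<le> m"
  shows "((\<lambda>t::real. complex_of_real (t ^ (k + l) / t ^ (2 * m))) \<longlongrightarrow> (if k = m \<and> l = m then 1 else 0)) at_top"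
proof (cases "k = m \<and> l = m")
  case True
  have "\<forall>\<^sub>F t in at_top. complex_of_real (t ^ (k + l) / t ^ (2 * m)) = 1"
    using eventually_gt_at_top[of "0::real"] by eventually_elim (use True in \<open>simp add: mult_2\<close>)
  thus ?thesis using True by (simp add: tendsto_eventually)
next
  case False
  define p where "p = 2 * m - (k + l)"
  have p: "0 < p" "2 * m = (k + l) + p" using assms False by (auto simp: p_def)
  have r: "inverse t ^ p = t ^ (k + l) / t ^ (2 * m)" if t: "t > 0" for t :: real
  proof -
    have "t ^ (2 * m) = t ^ (k + l) * t ^ p" by (simp only: p(2) power_add)
    moreover have "t ^ (k + l) / (t ^ (k + l) * t ^ p) = inverse (t ^ p)" using t by (simp add: field_simps)
    ultimately show ?thesis by (simp add: power_inverse)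
  qed
  have ev: "\<forall>\<^sub>F t in at_top. complex_of_real (inverse t ^ p) = complex_of_real (t ^ (k + l) / t ^ (2 * m))"
    using eventually_gt_at_top[of "0::real"]
    by eventually_elim (simp only: r)
  have "((\<lambda>t::real. inverse t ^ p) \<longlongrightarrow> 0 ^ p) at_top"
    by (intro tendsto_power tendsto_inverse_0_at_top filterlim_ident)
  hence "((\<lambda>t::real. inverse t ^ p) \<longlongrightarrow> 0) at_top" unfolding zero_power[OF p(1)] .
  hence "((\<lambda>t::real. complex_of_real (inverse t ^ p)) \<longlongrightarrow> complex_of_real 0) at_top"
    by (rule tendsto_of_real)
  hence "((\<lambda>t::real. complex_of_real (inverse t ^ p)) \<longlongrightarrow> 0) at_top"
    unfolding of_real_0 .
  hence "((\<lambda>t::real. complex_of_real (t ^ (k + l) / t ^ (2 * m))) \<longlongrightarrow> 0) at_top"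
    by (rule Lim_transform_eventually[OF _ ev])
  moreover have "(if k = m \<and> l = m then 1 else (0::complex)) = 0" using False by simp
  ultimately show ?thesis by (simp only:)
qed

lemma sum_split_sym:
  fixes h :: "nat \<Rightarrow> 'a::comm_monoid_add"
  shows "(\<Sum>q\<le>2*m. h q) = (\<Sum>q<m. h q) + h m + (\<Sum>q<m. h (2*m - q))"
proof -
  have U: "{..2*m} = {..<m} \<union> ({m} \<union> {m<..2*m})" by auto
  have "(\<Sum>q\<le>2*m. h q) = (\<Sum>q<m. h q) + (h m + (\<Sum>q\<in>{m<..2*m}. h q))"
    unfolding U by (subst sum.union_disjoint) (auto simp: sum.union_disjoint)
  also have "(\<Sum>q\<in>{m<..2*m}. h q) = (\<Sum>q<m. h (2*m - q))"
    by (rule sum.reindex_bij_witness[where i="\<lambda>q. 2*m - q" and j="\<lambda>q. 2*m - q"]) auto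
  finally show ?thesis by (simp add: add.assoc)
qed

lemma neg1_pow_diff: "q \<le> 2 * m \<Longrightarrow> (-1::complex) ^ (2 * m - q) = (-1) ^ q"
  by (cases "even q") (simp_all add: neg_one_even_power neg_one_odd_power even_diff_nat)

lemma Wm_formula:
  fixes \<psi> :: "int^'d \<Rightarrow> complex"
  assumes \<psi>: "in_l2 \<psi>"
  shows "l2inner ((Wop j ^^ m) \<psi>) ((Wop j ^^ m) \<psi>) = of_nat ((2*m) choose m) * l2inner \<psi> \<psi>
     + (\<Sum>q<m. of_nat ((2*m) choose q) * (-1) ^ (q + m) *
          (l2inner \<psi> (\<lambda>n. \<psi> (n - axis j (int (2*m - 2*q)))) + l2inner \<psi> (\<lambda>n. \<psi> (n + axis j (int (2*m - 2*q))))))"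
proof -
  define ip where "ip z = l2inner \<psi> (\<lambda>n. \<psi> (n - axis j z))" for z :: int
  define h where "h q = of_nat ((2*m) choose q) * (-1) ^ q * ip (int (2*m) - 2 * int q)" for q
  have "l2inner ((Wop j ^^ m) \<psi>) ((Wop j ^^ m) \<psi>) = (-1) ^ m * l2inner \<psi> ((Wop j ^^ m) ((Wop j ^^ m) \<psi>))"
    by (rule Wopk_adj[OF \<psi> in_l2_Wopk[OF \<psi>]])
  also have "(Wop j ^^ m) ((Wop j ^^ m) \<psi>) = (Wop j ^^ (2*m)) \<psi>"
    by (simp add: mult_2 funpow_add)
  also have "(Wop j ^^ (2*m)) \<psi> = (\<lambda>n. \<Sum>q\<le>2*m. (of_nat ((2*m) choose q) * (-1) ^ q) * \<psi> (n - axis j (int (2*m) - 2 * int q)))"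
    by (rule ext) (simp add: Wopk_closed)
  also have "l2inner \<psi> \<dots> = (\<Sum>q\<le>2*m. h q)"
    using \<psi> by (subst l2inner_sum2) (auto intro: in_l2_cmult in_l2_shift' simp: l2inner_cmult2 h_def ip_def)
  also have "\<dots> = (\<Sum>q<m. h q) + h m + (\<Sum>q<m. h (2*m - q))"
    by (rule sum_split_sym)
  finally have A: "l2inner ((Wop j ^^ m) \<psi>) ((Wop j ^^ m) \<psi>) = (-1) ^ m * ((\<Sum>q<m. h q) + h m + (\<Sum>q<m. h (2*m - q)))" .
  have ip0: "ip 0 = l2inner \<psi> \<psi>" by (simp add: ip_def axis_zero_int)
  have m1: "(-1::complex) ^ m * (-1) ^ m = 1" by (simp add: power_mult_distrib[symmetric])
  have hm: "(-1) ^ m * h m = of_nat ((2*m) choose m) * l2inner \<psi> \<psi>"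
  proof -
    have "(-1) ^ m * h m = ((-1) ^ m * (-1) ^ m) * (of_nat ((2*m) choose m) * ip 0)"
      by (simp add: h_def mult_ac)
    thus ?thesis by (simp add: m1 ip0)
  qed
  have hq: "(-1) ^ m * h q = of_nat ((2*m) choose q) * (-1) ^ (q + m) * ip (int (2*m - 2*q))"
    if "q < m" for q
  proof -
    have z: "int (2*m) - 2 * int q = int (2*m - 2*q)" using that by simp
    show ?thesis unfolding h_def z by (simp add: power_add mult_ac)
  qed
  have hq': "(-1) ^ m * h (2*m - q) = of_nat ((2*m) choose q) * (-1) ^ (q + m) * ip (- int (2*m - 2*q))"
    if "q < m" for q
  proof -
    have z: "int (2*m) - 2 * int (2*m - q) = - int (2*m - 2*q)" using that by simp
    have c: "(2*m) choose (2*m - q) = (2*m) choose q"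
      using that by (simp add: binomial_symmetric[symmetric])
    have s: "(-1::complex) ^ (2*m - q) = (-1) ^ q" using that by (intro neg1_pow_diff) simp
    show ?thesis unfolding h_def z c s by (simp add: power_add mult_ac)
  qed
  have S1: "(\<Sum>q<m. (-1) ^ m * h q) = (\<Sum>q<m. of_nat ((2*m) choose q) * (-1) ^ (q + m) * ip (int (2*m - 2*q)))"
    by (rule sum.cong) (auto simp: hq)
  have S2: "(\<Sum>q<m. (-1) ^ m * h (2*m - q)) = (\<Sum>q<m. of_nat ((2*m) choose q) * (-1) ^ (q + m) * ip (- int (2*m - 2*q)))"
    by (rule sum.cong) (auto simp: hq')
  have ax: "ip (- x) = l2inner \<psi> (\<lambda>n. \<psi> (n + axis j x))" for x
  proof -
    have e: "(\<lambda>n. \<psi> (n - axis j (- x))) = (\<lambda>n. \<psi> (n + axis j x))"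
      by (rule ext, rule arg_cong[where f=\<psi>]) (simp add: axis_def vec_eq_iff)
    show ?thesis by (simp only: ip_def e)
  qed
  have "l2inner ((Wop j ^^ m) \<psi>) ((Wop j ^^ m) \<psi>) = (\<Sum>q<m. (-1) ^ m * h q) + (-1) ^ m * h m + (\<Sum>q<m. (-1) ^ m * h (2*m - q))"
    unfolding A by (simp add: distrib_left sum_distrib_left)
  also have "\<dots> = of_nat ((2*m) choose m) * l2inner \<psi> \<psi>
     + (\<Sum>q<m. of_nat ((2*m) choose q) * (-1) ^ (q + m) * (ip (int (2*m - 2*q)) + ip (- int (2*m - 2*q))))"
    unfolding S1 S2 hm by (simp add: distrib_left sum.distrib add_ac)
  also have "\<dots> = of_nat ((2*m) choose m) * l2inner \<psi> \<psi>
     + (\<Sum>q<m. of_nat ((2*m) choose q) * (-1) ^ (q + m) *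
          (l2inner \<psi> (\<lambda>n. \<psi> (n - axis j (int (2*m - 2*q)))) + l2inner \<psi> (\<lambda>n. \<psi> (n + axis j (int (2*m - 2*q))))))"
    by (simp only: ax) (simp only: ip_def)
  finally show ?thesis .
qed


theorem theorem2p1:
  fixes \<psi> :: "int^'d \<Rightarrow> complex" and m :: nat
  assumes "in_l2 \<psi>"
    and "moment_dens m \<psi> summable_on UNIV"
  shows "\<exists>L::real.
     ((\<lambda>t. moment_sq m (evolZ t \<psi>) / t ^ (2*m)) \<longlongrightarrow> L) at_top \<and>
     complex_of_real L =
        of_nat CARD('d) * of_nat ((2*m) choose m) * complex_of_real (l2norm_sq \<psi>)
        + (\<Sum>q<m. of_nat ((2*m) choose q) * (-1) ^ (q + m) * l2inner \<psi> (stepS (2*m - 2*q) \<psi>)) \<and>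
     (\<psi> \<noteq> (\<lambda>_. 0) \<longrightarrow> L > 0) \<and>
     L \<le> 4 ^ m * real CARD('d) * l2norm_sq \<psi>"
proof -
  have H: "inH j m \<psi>" for j using H_init[OF assms] .
  have phil2: "in_l2 (phi j \<psi> m k)" for j k
    using phi_H[OF H[of j] le_refl, of k] by (rule H_l2)
  define V where "V j t = (\<lambda>n. \<Sum>k\<le>m. (\<i> * complex_of_real t) ^ k * evolZ t (phi j \<psi> m k) n)" for j t
  have Vl2: "in_l2 (V j t)" for j t
    unfolding V_def by (intro in_l2_sum in_l2_cmult evol_l2 phil2) simp
  have Vpt: "(cmod (V j t n))\<^sup>2 = \<bar>real_of_int (n $ j)\<bar> ^ (2*m) * (cmod (evolZ t \<psi> n))\<^sup>2" for j t n
  proof -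
    have "V j t n = of_int (n $ j) ^ m * evolZ t \<psi> n"
      unfolding V_def using Xpow_evol[OF H[of j] le_refl] by simp
    moreover have "(\<bar>x\<bar> ^ m)\<^sup>2 = \<bar>x\<bar> ^ (2 * m)" for x :: real
      by (simp add: power_mult[symmetric] mult.commute)
    ultimately show ?thesis by (simp add: norm_mult norm_power power_mult_distrib)
  qed
  have MS: "moment_sq m (evolZ t \<psi>) = (\<Sum>j\<in>UNIV. l2norm_sq (V j t))" for t
  proof -
    have "moment_sq m (evolZ t \<psi>) = infsum (\<lambda>n. \<Sum>j\<in>UNIV. (cmod (V j t n))\<^sup>2) UNIV"
      unfolding moment_sq_def moment_dens_def by (simp add: Vpt)
    also have "\<dots> = (\<Sum>j\<in>UNIV. infsum (\<lambda>n. (cmod (V j t n))\<^sup>2) UNIV)"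
      using Vl2 unfolding in_l2_def by (intro infsum_finsum) auto
    finally show ?thesis by (simp add: l2norm_sq_def)
  qed
  define Q where "Q j k l = (- \<i>) ^ k * \<i> ^ l * l2inner (phi j \<psi> m k) (phi j \<psi> m l)" for j k l
  have cnjp: "cnj ((\<i> * complex_of_real t) ^ k) = (- \<i>) ^ k * complex_of_real t ^ k" for t k
    by (simp add: power_mult_distrib)
  have CV: "complex_of_real (l2norm_sq (V j t)) = (\<Sum>k\<le>m. \<Sum>l\<le>m. Q j k l * complex_of_real (t ^ (k + l)))" for j t
  proof -
    have "complex_of_real (l2norm_sq (V j t)) = l2inner (V j t) (V j t)" by (rule l2norm_inner[OF Vl2])
    also have "\<dots> = (\<Sum>k\<le>m. \<Sum>l\<le>m. cnj ((\<i> * complex_of_real t) ^ k) * (\<i> * complex_of_real t) ^ l *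
          l2inner (evolZ t (phi j \<psi> m k)) (evolZ t (phi j \<psi> m l)))"
      unfolding V_def by (rule l2inner_sums) (auto intro: evol_l2 phil2)
    also have "\<dots> = (\<Sum>k\<le>m. \<Sum>l\<le>m. Q j k l * complex_of_real (t ^ (k + l)))"
      by (intro sum.cong refl) (simp add: cnjp evol_unitary phil2 Q_def power_mult_distrib power_add mult_ac)
    finally show ?thesis .
  qed
  define L where "L = (\<Sum>j\<in>UNIV. l2norm_sq ((Wop j ^^ m) \<psi>))"
  have Qmm: "Q j m m = complex_of_real (l2norm_sq ((Wop j ^^ m) \<psi>))" for j
  proof -
    have "(- \<i>) ^ m * \<i> ^ m = (1::complex)" by (simp add: power_mult_distrib[symmetric])
    thus ?thesis by (simp add: Q_def phi_top l2norm_inner[OF in_l2_Wopk[OF assms(1)]])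
  qed
  have sumQ: "(\<Sum>k\<le>m. \<Sum>l\<le>m. Q j k l * (if k = m \<and> l = m then 1 else 0)) = Q j m m" for j
  proof -
    have "Q j k l * (if k = m \<and> l = m then 1 else 0) = (if l = m then (if k = m then Q j k l else 0) else 0)" for k l
      by simp
    thus ?thesis by (simp add: sum.delta)
  qed
  have limC: "((\<lambda>t. complex_of_real (moment_sq m (evolZ t \<psi>) / t ^ (2*m))) \<longlongrightarrow> complex_of_real L) at_top"
  proof -
    have eq: "complex_of_real (moment_sq m (evolZ t \<psi>) / t ^ (2*m)) =
        (\<Sum>j\<in>UNIV. \<Sum>k\<le>m. \<Sum>l\<le>m. Q j k l * complex_of_real (t ^ (k + l) / t ^ (2*m)))" for t
      by (simp add: MS CV sum_divide_distrib)
    have "((\<lambda>t. \<Sum>j\<in>UNIV. \<Sum>k\<le>m. \<Sum>l\<le>m. Q j k l * complex_of_real (t ^ (k + l) / t ^ (2*m))) \<longlongrightarrow>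
          (\<Sum>j\<in>UNIV. \<Sum>k\<le>m. \<Sum>l\<le>m. Q j k l * (if k = m \<and> l = m then 1 else 0))) at_top"
      by (intro tendsto_sum tendsto_mult tendsto_const pow_ratio_lim) auto
    moreover have "(\<Sum>j\<in>UNIV. \<Sum>k\<le>m. \<Sum>l\<le>m. Q j k l * (if k = m \<and> l = m then 1 else 0)) = complex_of_real L"
      by (simp add: sumQ Qmm L_def)
    ultimately show ?thesis unfolding eq by (simp only:)
  qed
  have lim: "((\<lambda>t. moment_sq m (evolZ t \<psi>) / t ^ (2*m)) \<longlongrightarrow> L) at_top"
    using limC by (simp only: tendsto_of_real_iff)
  have st: "l2inner \<psi> (stepS s \<psi>) = (\<Sum>j\<in>UNIV. l2inner \<psi> (\<lambda>n. \<psi> (n - axis j (int s))) + l2inner \<psi> (\<lambda>n. \<psi> (n + axis j (int s))))" for s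
  proof -
    have "stepS s \<psi> = (\<lambda>n. \<Sum>j\<in>UNIV. \<psi> (n - axis j (int s)) + \<psi> (n + axis j (int s)))"
      by (rule ext) (simp add: stepS_def)
    hence "l2inner \<psi> (stepS s \<psi>) = (\<Sum>j\<in>UNIV. l2inner \<psi> (\<lambda>n. \<psi> (n - axis j (int s)) + \<psi> (n + axis j (int s))))"
      using assms(1) by (simp add: l2inner_sum2 in_l2_add in_l2_shift in_l2_shift')
    also have "\<dots> = (\<Sum>j\<in>UNIV. l2inner \<psi> (\<lambda>n. \<psi> (n - axis j (int s))) + l2inner \<psi> (\<lambda>n. \<psi> (n + axis j (int s))))"
      using assms(1) by (intro sum.cong refl l2inner_add2) (auto intro: in_l2_shift in_l2_shift')
    finally show ?thesis .
  qed
  have formula: "complex_of_real L =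
        of_nat CARD('d) * of_nat ((2*m) choose m) * complex_of_real (l2norm_sq \<psi>)
        + (\<Sum>q<m. of_nat ((2*m) choose q) * (-1) ^ (q + m) * l2inner \<psi> (stepS (2*m - 2*q) \<psi>))"
  proof -
    have "complex_of_real L = (\<Sum>j\<in>UNIV. l2inner ((Wop j ^^ m) \<psi>) ((Wop j ^^ m) \<psi>))"
      by (simp add: L_def l2norm_inner in_l2_Wopk assms(1))
    also have "\<dots> = (\<Sum>j\<in>UNIV. of_nat ((2*m) choose m) * l2inner \<psi> \<psi>
     + (\<Sum>q<m. of_nat ((2*m) choose q) * (-1) ^ (q + m) *
          (l2inner \<psi> (\<lambda>n. \<psi> (n - axis j (int (2*m - 2*q)))) + l2inner \<psi> (\<lambda>n. \<psi> (n + axis j (int (2*m - 2*q)))))))"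
      by (simp add: Wm_formula assms(1))
    also have "\<dots> = of_nat CARD('d) * (of_nat ((2*m) choose m) * l2inner \<psi> \<psi>)
     + (\<Sum>q<m. of_nat ((2*m) choose q) * (-1) ^ (q + m) *
          (\<Sum>j\<in>UNIV. l2inner \<psi> (\<lambda>n. \<psi> (n - axis j (int (2*m - 2*q)))) + l2inner \<psi> (\<lambda>n. \<psi> (n + axis j (int (2*m - 2*q))))))"
    proof -
      have sw: "(\<Sum>j\<in>UNIV. \<Sum>q<m. of_nat ((2*m) choose q) * (-1) ^ (q + m) *
          (l2inner \<psi> (\<lambda>n. \<psi> (n - axis j (int (2*m - 2*q)))) + l2inner \<psi> (\<lambda>n. \<psi> (n + axis j (int (2*m - 2*q))))))
        = (\<Sum>q<m. of_nat ((2*m) choose q) * (-1) ^ (q + m) *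
          (\<Sum>j\<in>UNIV. l2inner \<psi> (\<lambda>n. \<psi> (n - axis j (int (2*m - 2*q)))) + l2inner \<psi> (\<lambda>n. \<psi> (n + axis j (int (2*m - 2*q))))))"
        by (subst sum.swap) (simp only: sum_distrib_left)
      show ?thesis by (simp only: sum.distrib sw sum_constant)
    qed
    also have "\<dots> = of_nat CARD('d) * of_nat ((2*m) choose m) * complex_of_real (l2norm_sq \<psi>)
        + (\<Sum>q<m. of_nat ((2*m) choose q) * (-1) ^ (q + m) * l2inner \<psi> (stepS (2*m - 2*q) \<psi>))"
      by (simp add: st l2norm_inner[OF assms(1)] mult.assoc)
    finally show ?thesis .
  qed
  have pos: "\<psi> \<noteq> (\<lambda>_. 0) \<longrightarrow> L > 0"
  proof
    assume nz: "\<psi> \<noteq> (\<lambda>_. 0)"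
    obtain j0 :: 'd where True by blast
    show "L > 0" unfolding L_def
      by (rule sum_pos2[of UNIV j0]) (auto intro: l2norm_pos[OF in_l2_Wopk[OF assms(1)] Wopk_nz[OF assms(1) nz]] l2norm_nonneg)
  qed
  have bound: "L \<le> 4 ^ m * real CARD('d) * l2norm_sq \<psi>"
  proof -
    have "L \<le> (\<Sum>j\<in>(UNIV::'d set). 4 ^ m * l2norm_sq \<psi>)"
      unfolding L_def by (rule sum_mono) (rule Wopk_norm[OF assms(1)])
    thus ?thesis by (simp add: mult_ac)
  qed
  show ?thesis using lim formula pos bound by blast
qed


end
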